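(* Let $\pi$ be a smooth irreducible representation of $G=\mathrm{U}(1,1)(E/F)$ over $\overline{\mathbb{F}}_p$. Then $\pi$ admits a central character, and the restriction $\pi|_{G_S}$ is semisimple of length at most $2$.
   Context: $p$ is an odd prime, $F$ a nonarchimedean local field of residual characteristic $p$, $E$ its unramified quadratic extension. $G=\{g\in\mathrm{GL}_2(E):g^*sg=s\}$ with $s=\begin{pmatrix}0&1\\1&0\end{pmatrix}$ and $g^*$ the conjugate transpose; $G_S=G\cap\mathrm{SL}_2(E)=\mathrm{SU}(1,1)(E/F)$. *)

theory Defs
  imports Main "HOL-Computational_Algebra.Polynomial"
begin

datatype 'a mat2 = M2 (e11: 'a) (e12: 'a) (e21: 'a) (e22: 'a)

definition m2_mult :: "'a::comm_ring_1 mat2 \<Rightarrow> 'a mat2 \<Rightarrow> 'a mat2" where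
  "m2_mult A B = M2 (e11 A * e11 B + e12 A * e21 B) (e11 A * e12 B + e12 A * e22 B)
                    (e21 A * e11 B + e22 A * e21 B) (e21 A * e12 B + e22 A * e22 B)"

definition m2_one :: "'a::comm_ring_1 mat2" where "m2_one = M2 1 0 0 1"

definition m2_det :: "'a::comm_ring_1 mat2 \<Rightarrow> 'a" where
  "m2_det A = e11 A * e22 A - e12 A * e21 A"

definition m2_star :: "('a \<Rightarrow> 'a) \<Rightarrow> 'a mat2 \<Rightarrow> 'a mat2" where
  "m2_star \<sigma> A = M2 (\<sigma> (e11 A)) (\<sigma> (e21 A)) (\<sigma> (e12 A)) (\<sigma> (e22 A))"

definition m2_s :: "'a::comm_ring_1 mat2" where "m2_s = M2 0 1 1 0"

text \<open>v is a normalized discrete valuation on the nonzero elements of E (value at 0 irrelevant).\<close>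
definition discrete_valuation :: "('e::field \<Rightarrow> int) \<Rightarrow> bool" where
  "discrete_valuation v \<longleftrightarrow>
     (\<forall>x y. x \<noteq> 0 \<longrightarrow> y \<noteq> 0 \<longrightarrow> v (x * y) = v x + v y) \<and>
     (\<forall>x y. x \<noteq> 0 \<longrightarrow> y \<noteq> 0 \<longrightarrow> x + y \<noteq> 0 \<longrightarrow> v (x + y) \<ge> min (v x) (v y)) \<and>
     (\<forall>n. \<exists>x. x \<noteq> 0 \<and> v x = n)"

text \<open>"x has valuation at least n" (with v(0) = infinity)\<close>
definition val_ge :: "('e::field \<Rightarrow> int) \<Rightarrow> int \<Rightarrow> 'e \<Rightarrow> bool" where
  "val_ge v n x \<longleftrightarrow> x = 0 \<or> v x \<ge> n"

definition val_complete :: "('e::field \<Rightarrow> int) \<Rightarrow> bool" where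
  "val_complete v \<longleftrightarrow>
     (\<forall>a :: nat \<Rightarrow> 'e. (\<forall>N. \<exists>M. \<forall>m\<ge>M. \<forall>n\<ge>M. val_ge v N (a m - a n)) \<longrightarrow>
        (\<exists>L. \<forall>N. \<exists>M. \<forall>n\<ge>M. val_ge v N (a n - L)))"

definition val_ring :: "('e::field \<Rightarrow> int) \<Rightarrow> 'e set" where
  "val_ring v = {x. val_ge v 0 x}"

definition val_ideal :: "('e::field \<Rightarrow> int) \<Rightarrow> 'e set" where
  "val_ideal v = {x. val_ge v 1 x}"

definition finite_residue_field :: "('e::field \<Rightarrow> int) \<Rightarrow> 'e set \<Rightarrow> bool" where
  "finite_residue_field v K \<longleftrightarrow>
     (\<exists>R. finite R \<and> R \<subseteq> K \<inter> val_ring v \<and>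
          (\<forall>x \<in> K \<inter> val_ring v. \<exists>r\<in>R. x - r \<in> val_ideal v))"

text \<open>
  Setting: E is a nonarchimedean local field (complete w.r.t. the normalized discrete valuation v,
  finite residue field of characteristic p), sigma is a nontrivial field automorphism of order 2
  preserving v, F = {x. sigma x = x}, and E/F is unramified (a uniformizer of E lies in F).
  Then F is a nonarchimedean local field of residual characteristic p and E its unramified
  quadratic extension with Galois conjugation sigma.
\<close>
definition unram_quad_setting :: "nat \<Rightarrow> ('e::field \<Rightarrow> int) \<Rightarrow> ('e \<Rightarrow> 'e) \<Rightarrow> bool" where
  "unram_quad_setting p v \<sigma> \<longleftrightarrow>
     discrete_valuation v \<and> val_complete v \<and>
     finite_residue_field v UNIV \<and> finite_residue_field v {x. \<sigma> x = x} \<and>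
     of_nat p \<in> val_ideal v \<and>
     bij \<sigma> \<and> (\<forall>x y. \<sigma> (x + y) = \<sigma> x + \<sigma> y) \<and> (\<forall>x y. \<sigma> (x * y) = \<sigma> x * \<sigma> y) \<and>
     \<sigma> 1 = 1 \<and> (\<forall>x. \<sigma> (\<sigma> x) = x) \<and> (\<exists>x. \<sigma> x \<noteq> x) \<and>
     (\<forall>x. x \<noteq> 0 \<longrightarrow> v (\<sigma> x) = v x) \<and>
     (\<exists>\<pi>. \<pi> \<noteq> 0 \<and> \<sigma> \<pi> = \<pi> \<and> v \<pi> = 1)"

definition U11 :: "('e::field \<Rightarrow> 'e) \<Rightarrow> 'e mat2 set" where
  "U11 \<sigma> = {g. m2_det g \<noteq> 0 \<and> m2_mult (m2_star \<sigma> g) (m2_mult m2_s g) = m2_s}"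

definition SU11 :: "('e::field \<Rightarrow> 'e) \<Rightarrow> 'e mat2 set" where
  "SU11 \<sigma> = {g \<in> U11 \<sigma>. m2_det g = 1}"

definition group_center :: "'e::field mat2 set \<Rightarrow> 'e mat2 set" where
  "group_center H = {z \<in> H. \<forall>g\<in>H. m2_mult z g = m2_mult g z}"

definition congr_sub :: "('e::field \<Rightarrow> int) \<Rightarrow> nat \<Rightarrow> 'e mat2 set" where
  "congr_sub v n = {g. m2_det g \<noteq> 0 \<and> val_ge v (int n) (e11 g - 1) \<and> val_ge v (int n) (e12 g) \<and>
                        val_ge v (int n) (e21 g) \<and> val_ge v (int n) (e22 g - 1)}"

definition is_Fpbar :: "nat \<Rightarrow> 'k::field itself \<Rightarrow> bool" where
  "is_Fpbar p _ \<longleftrightarrow> CHAR('k) = p \<and>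
     (\<forall>q :: 'k poly. degree q > 0 \<longrightarrow> (\<exists>x. poly q x = 0)) \<and>
     (\<forall>x :: 'k. \<exists>n>0. x ^ (p ^ n) = x)"

definition is_rep :: "('k::field \<Rightarrow> 'v::ab_group_add \<Rightarrow> 'v) \<Rightarrow> 'e::field mat2 set \<Rightarrow>
                      ('e mat2 \<Rightarrow> 'v \<Rightarrow> 'v) \<Rightarrow> bool" where
  "is_rep scale H \<rho> \<longleftrightarrow> vector_space scale \<and>
     (\<forall>g\<in>H. Vector_Spaces.linear scale scale (\<rho> g)) \<and>
     (\<forall>x. \<rho> m2_one x = x) \<and>
     (\<forall>g\<in>H. \<forall>h\<in>H. \<forall>x. \<rho> (m2_mult g h) x = \<rho> g (\<rho> h x))"

text \<open>smooth: every vector is fixed by an open subgroup (the K_n \<inter> H form a basis)\<close>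
definition is_smooth :: "('e::field \<Rightarrow> int) \<Rightarrow> 'e mat2 set \<Rightarrow> ('e mat2 \<Rightarrow> 'v \<Rightarrow> 'v) \<Rightarrow> bool" where
  "is_smooth v H \<rho> \<longleftrightarrow> (\<forall>x. \<exists>n. \<forall>g \<in> H \<inter> congr_sub v n. \<rho> g x = x)"

definition stable_subspace :: "('k::field \<Rightarrow> 'v::ab_group_add \<Rightarrow> 'v) \<Rightarrow> 'e mat2 set \<Rightarrow>
                      ('e mat2 \<Rightarrow> 'v \<Rightarrow> 'v) \<Rightarrow> 'v set \<Rightarrow> bool" where
  "stable_subspace scale H \<rho> W \<longleftrightarrow> module.subspace scale W \<and> (\<forall>h\<in>H. \<forall>w\<in>W. \<rho> h w \<in> W)"

definition irred_subrep :: "('k::field \<Rightarrow> 'v::ab_group_add \<Rightarrow> 'v) \<Rightarrow> 'e mat2 set \<Rightarrow>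
                      ('e mat2 \<Rightarrow> 'v \<Rightarrow> 'v) \<Rightarrow> 'v set \<Rightarrow> bool" where
  "irred_subrep scale H \<rho> W \<longleftrightarrow> stable_subspace scale H \<rho> W \<and> W \<noteq> {0} \<and>
     (\<forall>U. stable_subspace scale H \<rho> U \<longrightarrow> U \<subseteq> W \<longrightarrow> U = {0} \<or> U = W)"

definition has_central_character :: "('k::field \<Rightarrow> 'v::ab_group_add \<Rightarrow> 'v) \<Rightarrow> 'e::field mat2 set \<Rightarrow>
                      ('e mat2 \<Rightarrow> 'v \<Rightarrow> 'v) \<Rightarrow> bool" where
  "has_central_character scale H \<rho> \<longleftrightarrow>
     (\<exists>\<chi>. (\<forall>z \<in> group_center H. \<chi> z \<noteq> 0) \<and>
          (\<forall>z \<in> group_center H. \<forall>z' \<in> group_center H. \<chi> (m2_mult z z') = \<chi> z * \<chi> z') \<and>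
          (\<forall>z \<in> group_center H. \<forall>x. \<rho> z x = scale (\<chi> z) x))"

text \<open>semisimple of length at most 2 (space is nonzero here): irreducible or direct sum of two irreducibles\<close>
definition semisimple_length_le2 :: "('k::field \<Rightarrow> 'v::ab_group_add \<Rightarrow> 'v) \<Rightarrow> 'e mat2 set \<Rightarrow>
                      ('e mat2 \<Rightarrow> 'v \<Rightarrow> 'v) \<Rightarrow> bool" where
  "semisimple_length_le2 scale H \<rho> \<longleftrightarrow>
     UNIV = {0::'v} \<or> irred_subrep scale H \<rho> UNIV \<or>
     (\<exists>W1 W2. irred_subrep scale H \<rho> W1 \<and> irred_subrep scale H \<rho> W2 \<and>
        W1 \<inter> W2 = {0} \<and> (\<forall>x. \<exists>a\<in>W1. \<exists>b\<in>W2. x = a + b))"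

end

theory Submission
  imports Defs "HOL-Computational_Algebra.Primes"
begin


locale uqs =
  fixes p :: nat and v :: "'e::field \<Rightarrow> int" and \<sigma> :: "'e \<Rightarrow> 'e"
  assumes pprime: "prime p" and podd: "odd p" and S: "unram_quad_setting p v \<sigma>"
begin

lemma vmult: "x \<noteq> 0 \<Longrightarrow> y \<noteq> 0 \<Longrightarrow> v (x * y) = v x + v y"
  using S unfolding unram_quad_setting_def discrete_valuation_def by blast
lemma vadd: "x \<noteq> 0 \<Longrightarrow> y \<noteq> 0 \<Longrightarrow> x + y \<noteq> 0 \<Longrightarrow> v (x + y) \<ge> min (v x) (v y)"
  using S unfolding unram_quad_setting_def discrete_valuation_def by blast
lemma sadd: "\<sigma> (x + y) = \<sigma> x + \<sigma> y"
  using S unfolding unram_quad_setting_def by blast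
lemma smult: "\<sigma> (x * y) = \<sigma> x * \<sigma> y"
  using S unfolding unram_quad_setting_def by blast
lemma sone[simp]: "\<sigma> 1 = 1"
  using S unfolding unram_quad_setting_def by blast
lemma sinv[simp]: "\<sigma> (\<sigma> x) = x"
  using S unfolding unram_quad_setting_def by blast
lemma snontriv: "\<exists>x. \<sigma> x \<noteq> x"
  using S unfolding unram_quad_setting_def by blast
lemma vs: "x \<noteq> 0 \<Longrightarrow> v (\<sigma> x) = v x"
  using S unfolding unram_quad_setting_def by blast
lemma unif: "\<exists>\<pi>. \<pi> \<noteq> 0 \<and> \<sigma> \<pi> = \<pi> \<and> v \<pi> = 1"
  using S unfolding unram_quad_setting_def by blast
lemma complete: "val_complete v"
  using S unfolding unram_quad_setting_def by blast
lemma resfin: "finite_residue_field v UNIV"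
  using S unfolding unram_quad_setting_def by blast
lemma pideal: "val_ge v 1 (of_nat p)"
  using S unfolding unram_quad_setting_def val_ideal_def by blast

lemma szero[simp]: "\<sigma> 0 = 0"
proof -
  have "\<sigma> 0 + \<sigma> 0 = \<sigma> 0 + 0" using sadd[of 0 0] by simp
  then show ?thesis by (rule add_left_imp_eq)
qed
lemma sminus: "\<sigma> (- x) = - \<sigma> x"
  using sadd[of x "-x"] by (simp add: eq_neg_iff_add_eq_0 add.commute)
lemma sdiff: "\<sigma> (x - y) = \<sigma> x - \<sigma> y"
  using sadd[of x "-y"] sminus[of y] by simp
lemma seq0[simp]: "\<sigma> x = 0 \<longleftrightarrow> x = 0"
  by (metis sinv szero)
lemma sinverse: "\<sigma> (inverse x) = inverse (\<sigma> x)"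
proof (cases "x = 0")
  case False
  have "\<sigma> x * \<sigma> (inverse x) = 1" using smult[of x "inverse x"] False by simp
  then show ?thesis using False by (metis inverse_unique)
qed simp
lemma sdivide: "\<sigma> (x / y) = \<sigma> x / \<sigma> y"
  by (simp add: divide_inverse smult sinverse)
lemma spow: "\<sigma> (x ^ n) = \<sigma> x ^ n"
  by (induction n) (simp_all add: smult)
lemma sof_nat[simp]: "\<sigma> (of_nat n) = of_nat n"
  by (induction n) (simp_all add: sadd)

lemma v1[simp]: "v 1 = 0"
  using vmult[of 1 1] by simp
lemma vm1[simp]: "v (-1) = 0"
  using vmult[of "-1" "-1"] by simp
lemma vneg[simp]: "v (- x) = v x"
proof (cases "x = 0")
  case False
  then show ?thesis using vmult[of "-1" x] by simp
qed simp
lemma vinv: "x \<noteq> 0 \<Longrightarrow> v (inverse x) = - v x"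
  using vmult[of x "inverse x"] by simp
lemma vdiv: "x \<noteq> 0 \<Longrightarrow> y \<noteq> 0 \<Longrightarrow> v (x / y) = v x - v y"
  by (simp add: divide_inverse vmult vinv)
lemma vpow: "x \<noteq> 0 \<Longrightarrow> v (x ^ n) = int n * v x"
  by (induction n) (simp_all add: vmult algebra_simps)

abbreviation vg where "vg \<equiv> val_ge v"

lemma vg0[simp]: "vg n 0" by (simp add: val_ge_def)
lemma vg_mono: "vg m x \<Longrightarrow> n \<le> m \<Longrightarrow> vg n x"
  by (auto simp: val_ge_def)
lemma vg_add: "vg n x \<Longrightarrow> vg n y \<Longrightarrow> vg n (x + y)"
  unfolding val_ge_def
proof -
  assume a: "x = 0 \<or> n \<le> v x" "y = 0 \<or> n \<le> v y"
  show "x + y = 0 \<or> n \<le> v (x + y)"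
  proof (cases "x = 0 \<or> y = 0 \<or> x + y = 0")
    case True then show ?thesis using a by auto
  next
    case False
    then have "v (x+y) \<ge> min (v x) (v y)" using vadd by blast
    then show ?thesis using a False by linarith
  qed
qed
lemma vg_neg[simp]: "vg n (- x) = vg n x"
  by (simp add: val_ge_def)
lemma vg_diff: "vg n x \<Longrightarrow> vg n y \<Longrightarrow> vg n (x - y)"
  using vg_add[of n x "-y"] by simp
lemma vg_mult: "vg n x \<Longrightarrow> vg m y \<Longrightarrow> vg (n + m) (x * y)"
  by (cases "x = 0 \<or> y = 0") (auto simp: val_ge_def vmult)
lemma vg_pow: "vg n x \<Longrightarrow> vg (int k * n) (x ^ k)"
proof (induction k)
  case 0 then show ?case by (simp add: val_ge_def)
next
  case (Suc k)
  then have "vg (n + int k * n) (x * x ^ k)" using vg_mult by blast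
  then show ?case by (simp add: algebra_simps)
qed
lemma vg_one': "vg 0 1" by (simp add: val_ge_def)
lemma vg_sum: "(\<And>i. i \<in> A \<Longrightarrow> vg n (f i)) \<Longrightarrow> vg n (sum f A)"
  by (induction A rule: infinite_finite_induct) (auto intro: vg_add)
lemma vg_of_nat: "vg 0 (of_nat k)"
proof (induction k)
  case (Suc k) then show ?case using vg_add[OF vg_one' Suc] by (simp add: add.commute)
qed (simp add: val_ge_def)
lemma vg_of_int: "vg 0 (of_int k)"
  by (cases k rule: int_cases) (auto simp: vg_of_nat simp del: of_nat_Suc)
lemma vg_one: "vg 0 1" by (simp add: val_ge_def)
lemma vg_all_zero: "(\<And>N. N \<ge> 0 \<Longrightarrow> vg N x) \<Longrightarrow> x = 0"
proof (rule ccontr)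
  assume a: "\<And>N. N \<ge> 0 \<Longrightarrow> vg N x" and "x \<noteq> 0"
  then have "vg (max 0 (v x + 1)) x" by simp
  with \<open>x \<noteq> 0\<close> show False by (simp add: val_ge_def)
qed
lemma vg_unit_mult: "v u = 0 \<Longrightarrow> vg n (u * x) \<Longrightarrow> u \<noteq> 0 \<Longrightarrow> vg n x"
  by (cases "x = 0") (auto simp: val_ge_def vmult)

lemma two_unit: "v 2 = 0" "(2::'e) \<noteq> 0"
proof -
  obtain k where k: "p = 2 * k + 1" using podd oddE by blast
  have h: "(1::'e) = of_nat p - 2 * of_nat k" by (simp add: k)
  have i: "\<not> vg 1 (1::'e)" by (simp add: val_ge_def)
  have "\<not> vg 1 (2::'e)"
  proof
    assume "vg 1 (2::'e)"
    then have "vg (1 + 0) (2 * of_nat k :: 'e)" using vg_mult vg_of_nat by blast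
    then have "vg 1 (of_nat p - 2 * of_nat k :: 'e)" using vg_diff pideal by simp
    then show False using i h by simp
  qed
  then show "(2::'e) \<noteq> 0" by auto
  have "vg 0 (2::'e)" using vg_of_nat[of 2] by simp
  with \<open>\<not> vg 1 (2::'e)\<close> show "v 2 = 0" by (auto simp: val_ge_def)
qed

end


lemma m2_eq_iff: "A = B \<longleftrightarrow> e11 A = e11 B \<and> e12 A = e12 B \<and> e21 A = e21 B \<and> e22 A = e22 B"
  by (cases A; cases B) auto

lemma m2_mult_assoc: "m2_mult (m2_mult A B) C = m2_mult A (m2_mult B C)"
  by (simp add: m2_mult_def algebra_simps)
lemma m2_mult_one[simp]: "m2_mult m2_one A = A" "m2_mult A m2_one = A"
  by (simp_all add: m2_mult_def m2_one_def m2_eq_iff)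
lemma m2_det_mult: "m2_det (m2_mult A B) = m2_det A * m2_det B"
  by (simp add: m2_mult_def m2_det_def algebra_simps)

definition sc :: "'a::comm_ring_1 \<Rightarrow> 'a mat2" where "sc l = M2 l 0 0 l"
lemma sc_mult: "m2_mult (sc a) (sc b) = sc (a * b)"
  by (simp add: sc_def m2_mult_def)
lemma sc_comm: "m2_mult (sc a) A = m2_mult A (sc a)"
  by (simp add: sc_def m2_mult_def algebra_simps)
lemma sc_one: "sc 1 = m2_one" by (simp add: sc_def m2_one_def)
lemma det_sc: "m2_det (sc a) = a * a" by (simp add: sc_def m2_det_def)
lemma sc_mult_components: "m2_mult (sc a) A = M2 (a * e11 A) (a * e12 A) (a * e21 A) (a * e22 A)"
  by (simp add: sc_def m2_mult_def)
lemma sc_pow: "sc (a ^ Suc n) = m2_mult (sc a) (sc (a ^ n))"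
  by (simp add: sc_mult)

definition m2_inv :: "'a::field mat2 \<Rightarrow> 'a mat2" where
  "m2_inv A = M2 (e22 A / m2_det A) (- e12 A / m2_det A) (- e21 A / m2_det A) (e11 A / m2_det A)"
lemma m2_inv_right: assumes "m2_det A \<noteq> 0" shows "m2_mult A (m2_inv A) = m2_one"
proof -
  obtain a b c d where A: "A = M2 a b c d" by (cases A)
  have D: "a * d - b * c \<noteq> 0" using assms by (simp add: A m2_det_def)
  have E: "(a*d - b*c)*(a*d-b*c) = a * (a * (d * d)) + b * (b * (c * c)) - a * (b * (c * (d * 2)))"
    by (simp add: algebra_simps)
  have "(a*d - b*c)*(a*d-b*c) \<noteq> 0" using D by simp
  then have F: "a * (a * (d * d)) + b * (b * (c * c)) \<noteq> a * (b * (c * (d * 2)))" using E by simp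
  show ?thesis unfolding A m2_mult_def m2_inv_def m2_one_def m2_det_def
    using D F by (simp add: field_simps)
qed
lemma m2_inv_left: assumes "m2_det A \<noteq> 0" shows "m2_mult (m2_inv A) A = m2_one"
proof -
  obtain a b c d where A: "A = M2 a b c d" by (cases A)
  have D: "a * d - b * c \<noteq> 0" using assms by (simp add: A m2_det_def)
  have E: "(a*d - b*c)*(a*d-b*c) = a * (a * (d * d)) + b * (b * (c * c)) - a * (b * (c * (d * 2)))"
    by (simp add: algebra_simps)
  have "(a*d - b*c)*(a*d-b*c) \<noteq> 0" using D by simp
  then have F: "a * (a * (d * d)) + b * (b * (c * c)) \<noteq> a * (b * (c * (d * 2)))" using E by simp
  show ?thesis unfolding A m2_mult_def m2_inv_def m2_one_def m2_det_def
    using D F by (simp add: field_simps)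
qed
lemma det_inv: "m2_det A \<noteq> 0 \<Longrightarrow> m2_det (m2_inv A) = 1 / m2_det A"
  using m2_det_mult[of A "m2_inv A"] m2_inv_right[of A]
  by (simp add: m2_one_def m2_det_def field_simps)

context uqs begin

lemma star_mult: "m2_star \<sigma> (m2_mult A B) = m2_mult (m2_star \<sigma> B) (m2_star \<sigma> A)"
  by (simp add: m2_star_def m2_mult_def sadd smult algebra_simps)
lemma star_one[simp]: "m2_star \<sigma> m2_one = m2_one"
  by (simp add: m2_star_def m2_one_def)
lemma star_sc: "m2_star \<sigma> (sc a) = sc (\<sigma> a)"
  by (simp add: m2_star_def sc_def)
lemma det_star: "m2_det (m2_star \<sigma> A) = \<sigma> (m2_det A)"
  by (simp add: m2_star_def m2_det_def sdiff smult mult.commute)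

lemma U11_iff: "g \<in> U11 \<sigma> \<longleftrightarrow> m2_det g \<noteq> 0 \<and> m2_mult (m2_star \<sigma> g) (m2_mult m2_s g) = m2_s"
  by (simp add: U11_def)

lemma one_U11: "m2_one \<in> U11 \<sigma>"
  by (simp add: U11_iff) (simp add: m2_one_def m2_det_def)

lemma mult_U11: assumes "g \<in> U11 \<sigma>" "h \<in> U11 \<sigma>" shows "m2_mult g h \<in> U11 \<sigma>"
proof -
  have "m2_mult (m2_star \<sigma> (m2_mult g h)) (m2_mult m2_s (m2_mult g h))
      = m2_mult (m2_star \<sigma> h) (m2_mult (m2_mult (m2_star \<sigma> g) (m2_mult m2_s g)) h)"
    by (simp add: star_mult m2_mult_assoc)
  also have "\<dots> = m2_s" using assms by (simp add: U11_iff)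
  finally show ?thesis using assms by (simp add: U11_iff m2_det_mult)
qed

lemma inv_U11: assumes "g \<in> U11 \<sigma>" shows "m2_inv g \<in> U11 \<sigma>"
proof -
  let ?i = "m2_inv g"
  have d: "m2_det g \<noteq> 0" using assms by (simp add: U11_iff)
  have "m2_mult (m2_star \<sigma> ?i) (m2_mult m2_s ?i)
      = m2_mult (m2_star \<sigma> ?i) (m2_mult (m2_mult (m2_star \<sigma> g) (m2_mult m2_s g)) ?i)"
    using assms by (simp add: U11_iff)
  also have "\<dots> = m2_mult (m2_star \<sigma> (m2_mult g ?i)) (m2_mult m2_s (m2_mult g ?i))"
    by (simp add: star_mult m2_mult_assoc)
  also have "\<dots> = m2_s" using d by (simp add: m2_inv_right)
  finally show ?thesis using d by (simp add: U11_iff det_inv)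
qed

lemma E1_nz: "l * \<sigma> l = 1 \<Longrightarrow> l \<noteq> 0"
  by (metis mult_zero_left zero_neq_one)
lemma sc_U11: "l * \<sigma> l = 1 \<Longrightarrow> sc l \<in> U11 \<sigma>"
  using E1_nz[of l] by (simp add: U11_iff sc_def m2_star_def m2_mult_def m2_s_def m2_det_def mult.commute)

lemma det_U11: assumes "g \<in> U11 \<sigma>" shows "m2_det g * \<sigma> (m2_det g) = 1"
proof -
  have "m2_det (m2_mult (m2_star \<sigma> g) (m2_mult m2_s g)) = m2_det m2_s"
    using assms by (simp add: U11_iff)
  then have "\<sigma> (m2_det g) * (m2_det m2_s * m2_det g) = m2_det m2_s"
    by (simp add: m2_det_mult det_star)
  moreover have "m2_det (m2_s :: 'e mat2) = -1" by (simp add: m2_s_def m2_det_def)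
  ultimately show ?thesis by (simp add: mult.commute)
qed

lemma s_U11: "m2_s \<in> U11 \<sigma>"
  by (simp add: U11_iff m2_star_def m2_mult_def m2_s_def m2_det_def)

lemma u_U11: "\<sigma> b = - b \<Longrightarrow> M2 1 b 0 1 \<in> U11 \<sigma>"
  by (simp add: U11_iff m2_star_def m2_mult_def m2_s_def m2_det_def)

lemma center_sc: assumes "z \<in> group_center (U11 \<sigma>)"
  shows "\<exists>l. z = sc l \<and> l * \<sigma> l = 1"
proof -
  obtain x where x: "\<sigma> x \<noteq> x" using snontriv by blast
  define b where "b = x - \<sigma> x"
  have b: "\<sigma> b = - b" "b \<noteq> 0" using x by (auto simp: b_def sdiff)
  have zU: "z \<in> U11 \<sigma>" and c: "\<And>g. g \<in> U11 \<sigma> \<Longrightarrow> m2_mult z g = m2_mult g z"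
    using assms by (auto simp: group_center_def)
  have c1: "m2_mult z (M2 1 b 0 1) = m2_mult (M2 1 b 0 1) z" using c u_U11 b by blast
  have c2: "m2_mult z m2_s = m2_mult m2_s z" using c s_U11 by blast
  have e: "e21 z = 0" "e11 z = e22 z" "e12 z = e21 z"
    using c1 c2 b(2) by (auto simp: m2_mult_def m2_s_def m2_eq_iff)
  then have zz: "z = sc (e11 z)" by (simp add: sc_def m2_eq_iff)
  have "m2_det z * \<sigma> (m2_det z) = 1" using det_U11 zU by blast
  then have "(e11 z * \<sigma> (e11 z))^2 = 1"
    using e by (simp add: m2_det_def smult power2_eq_square algebra_simps)
  have "m2_mult (m2_star \<sigma> z) (m2_mult m2_s z) = m2_s" using zU by (simp add: U11_iff)
  then have "e11 z * \<sigma> (e11 z) = 1"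
    using e by (simp add: m2_star_def m2_mult_def m2_s_def m2_eq_iff mult.commute)
  with zz show ?thesis by blast
qed

lemma sc_center: "l * \<sigma> l = 1 \<Longrightarrow> sc l \<in> group_center (U11 \<sigma>)"
  by (simp add: group_center_def sc_U11 sc_comm)

end


context uqs begin

lemma p2: "p \<ge> 2" using pprime prime_ge_2_nat by blast

lemma pstep: assumes k: "k \<ge> 1" and y: "vg k y" shows "vg (k + 1) ((1 + y)^p - 1)"
proof -
  have bin: "(y + 1)^p = (\<Sum>i\<le>p. of_nat (p choose i) * y^i * 1^(p-i))"
    by (rule binomial_ring)
  have sp: "{..p} = insert 0 {1..p}" by auto
  have "(1 + y)^p - 1 = (\<Sum>i\<in>{1..p}. of_nat (p choose i) * y^i)"
    using bin by (simp add: sp add.commute)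
  also have "vg (k+1) \<dots>"
  proof (rule vg_sum)
    fix i assume i: "i \<in> {1..p}"
    have yi: "vg (int i * k) (y^i)" using vg_pow[OF y] by blast
    show "vg (k+1) (of_nat (p choose i) * y^i)"
    proof (cases "i = p")
      case True
      have "int p * k \<ge> 2 * k" using p2 k by (intro mult_right_mono) auto
      then have "int p * k \<ge> k + 1" using k by linarith
      then show ?thesis using yi True by (auto intro: vg_mono)
    next
      case False
      then have "p dvd (p choose i)" using i dvd_choose_prime[of i p] pprime by auto
      then obtain c where c: "p choose i = p * c" by blast
      have "vg (1 + 0) (of_nat p * of_nat c :: 'e)" using vg_mult[OF pideal vg_of_nat] .
      then have "vg (1 + int i * k) (of_nat (p choose i) * y^i)"
        using vg_mult yi by (simp add: c)
      moreover have "int i * k \<ge> 1 * k" using i k by (intro mult_right_mono) auto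
      then have "1 + int i * k \<ge> k + 1" by linarith
      ultimately show ?thesis by (auto intro: vg_mono)
    qed
  qed
  finally show ?thesis .
qed

lemma ppow: assumes "vg 1 (w - 1)" shows "vg (int m + 1) (w^(p^m) - 1)"
proof (induction m)
  case 0 then show ?case using assms by simp
next
  case (Suc m)
  have "vg (int m + 1 + 1) ((1 + (w^(p^m) - 1))^p - 1)"
    using pstep[OF _ Suc] by simp
  moreover have "w^(p^Suc m) = (w^(p^m))^p" by (simp add: power_mult[symmetric] mult.commute)
  ultimately show ?case by (simp add: algebra_simps)
qed

lemma vg0_of_vg1: "vg n (w - 1) \<Longrightarrow> n \<ge> 0 \<Longrightarrow> vg 0 w"
  using vg_add[of 0 "w - 1" 1] vg_one by (auto intro: vg_mono)

lemma powclose: assumes "vg n (w - 1)" "n \<ge> 0" shows "vg n (w^k - 1)"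
proof (induction k)
  case 0 then show ?case by simp
next
  case (Suc k)
  have w: "vg 0 w" using vg0_of_vg1 assms by blast
  have "vg (0 + n) (w^k * (w - 1))" using vg_mult[OF vg_pow[OF w, of k] assms(1)] by simp
  then have "vg n (w^k * (w - 1) + (w^k - 1))" using vg_add Suc by simp
  then show ?case by (simp add: algebra_simps)
qed

lemma pigeon: assumes u: "u \<noteq> 0" "v u = 0" shows "\<exists>M>0. vg 1 (u^M - 1)"
proof -
  obtain R where R: "finite R" "R \<subseteq> val_ring v"
    "\<And>x. x \<in> val_ring v \<Longrightarrow> \<exists>r\<in>R. x - r \<in> val_ideal v"
    using resfin unfolding finite_residue_field_def by auto
  define f where "f i = (SOME r. r \<in> R \<and> u^i - r \<in> val_ideal v)" for i :: nat
  have ui: "u^i \<in> val_ring v" for i using u by (simp add: val_ring_def val_ge_def vpow)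
  have f: "f i \<in> R \<and> u^i - f i \<in> val_ideal v" for i
    unfolding f_def by (rule someI_ex) (use R(3)[OF ui] in blast)
  have "\<not> inj_on f {..card R}"
  proof
    assume "inj_on f {..card R}"
    then have "card (f ` {..card R}) = card R + 1" by (simp add: card_image)
    moreover have "f ` {..card R} \<subseteq> R" using f by auto
    then have "card (f ` {..card R}) \<le> card R" by (rule card_mono[OF R(1)])
    ultimately show False by simp
  qed
  then obtain i j where "i \<noteq> j" "f i = f j"
    unfolding inj_on_def by blast
  then obtain i j where ij: "i < j" "f i = f j"
    by (metis linorder_neqE_nat)
  have "vg 1 (u^j - f j)" "vg 1 (u^i - f i)" using f by (auto simp: val_ideal_def)
  then have "vg 1 ((u^j - f j) - (u^i - f i))" by (rule vg_diff)
  moreover have "u^j = u^i * u^(j-i)" using ij by (simp add: power_add[symmetric])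
  ultimately have "vg 1 (u^i * (u^(j-i) - 1))"
    using ij(2) by (simp add: algebra_simps)
  then have "vg 1 (u^(j-i) - 1)" using vg_unit_mult[of "u^i"] u by (simp add: vpow)
  then show ?thesis using ij by (intro exI[of _ "j - i"]) auto
qed

end


definition opev :: "('a::field \<Rightarrow> 'b::ab_group_add \<Rightarrow> 'b) \<Rightarrow> ('b \<Rightarrow> 'b) \<Rightarrow> 'a poly \<Rightarrow> 'b \<Rightarrow> 'b" where
  "opev s A q x = (\<Sum>i\<le>degree q. s (coeff q i) ((A^^i) x))"

context vector_space begin


lemma pe_bound: "degree (q::'a poly) \<le> n \<Longrightarrow> opev scale A q x = (\<Sum>i\<le>n. coeff q i *s (A^^i) x)"
proof -
  assume d: "degree q \<le> n"
  have "(\<Sum>i\<le>n. coeff q i *s (A^^i) x) = (\<Sum>i\<le>degree q. coeff q i *s (A^^i) x)"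
    by (rule sum.mono_neutral_right) (use d in \<open>auto simp: coeff_eq_0\<close>)
  then show ?thesis by (simp add: opev_def)
qed

lemma pe_mult:
  assumes lin: "Vector_Spaces.linear scale scale A"
  shows "opev scale A ([:-z, 1:] * (q::'a poly)) x = A (opev scale A q x) - z *s opev scale A q x"
proof -
  have mh: "module_hom scale scale A" using lin by (simp add: linear_iff_module_hom)
  let ?n = "degree q"
  have dq: "degree ([:-z, 1:] * q) \<le> Suc ?n"
  proof -
    have "degree ([:-z, 1:] * q) \<le> degree [:-z, 1:] + degree q" by (rule degree_mult_le)
    then show ?thesis by simp
  qed
  have e: "[:-z, 1:] * q = pCons 0 q - smult z q" by simp
  have "opev scale A ([:-z, 1:] * q) x = (\<Sum>i\<le>Suc ?n. coeff ([:-z, 1:] * q) i *s (A^^i) x)"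
    by (rule pe_bound[OF dq])
  also have "\<dots> = (\<Sum>i\<le>Suc ?n. coeff (pCons 0 q) i *s (A^^i) x)
                 - (\<Sum>i\<le>Suc ?n. (z * coeff q i) *s (A^^i) x)"
    unfolding e by (simp add: scale_left_diff_distrib sum_subtractf)
  also have "(\<Sum>i\<le>Suc ?n. coeff (pCons 0 q) i *s (A^^i) x) = (\<Sum>i\<le>?n. coeff q i *s (A^^Suc i) x)"
    by (subst sum.atMost_Suc_shift) simp
  also have "\<dots> = A (opev scale A q x)"
    by (simp add: opev_def module_hom.sum[OF mh] module_hom.scale[OF mh])
  also have "(\<Sum>i\<le>Suc ?n. (z * coeff q i) *s (A^^i) x) = z *s opev scale A q x"
    by (simp only: pe_bound[of q "Suc ?n", OF le_SucI[OF le_refl]] scale_sum_right scale_scale)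
  finally show ?thesis .
qed

lemma pe_monom: "N > 0 \<Longrightarrow> opev scale A (monom 1 N - 1) x = (A^^N) x - x"
proof -
  assume N: "N > 0"
  have d: "degree (monom 1 N - 1 :: 'a poly) \<le> N"
    by (metis degree_diff_le degree_monom_le degree_1 le0)
  have pt: "coeff (monom 1 N - 1) i *s y = (if i = N then y else 0) - (if i = 0 then y else 0)" for i y
    using N by (auto simp: coeff_monom)
  have "opev scale A (monom 1 N - 1) x = (\<Sum>i\<le>N. (if i = N then (A^^i) x else 0) - (if i = 0 then (A^^i) x else 0))"
    using pe_bound[OF d] pt by simp
  also have "\<dots> = (A^^N) x - x" by (simp add: sum_subtractf)
  finally show ?thesis .
qed

lemma eigen_from_poly:
  assumes lin: "Vector_Spaces.linear scale scale A"
    and ac: "\<And>q :: 'a poly. degree q > 0 \<Longrightarrow> \<exists>r. poly q r = 0"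
    and x0: "x0 \<noteq> 0"
  shows "(q::'a poly) \<noteq> 0 \<Longrightarrow> opev scale A q x0 = 0 \<Longrightarrow> \<exists>z y. y \<noteq> 0 \<and> A y = z *s y"
proof (induction "degree q" arbitrary: q rule: less_induct)
  case (less q)
  show ?case
  proof (cases "degree q = 0")
    case True
    then have "opev scale A q x0 = coeff q 0 *s x0" by (simp add: opev_def)
    moreover have "coeff q 0 \<noteq> 0" using True less.prems(1) by (metis leading_coeff_0_iff)
    ultimately show ?thesis using less.prems(2) x0 by simp
  next
    case False
    then obtain r where "poly q r = 0" using ac by blast
    then have "[:-r, 1:] dvd q" using poly_eq_0_iff_dvd by blast
    then obtain q' where q: "q = [:-r, 1:] * q'" by (elim dvdE)
    have q0: "q' \<noteq> 0" using less.prems q by auto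
    have deg: "degree q = Suc (degree q')" unfolding q using q0 by (subst degree_mult_eq) auto
    show ?thesis
    proof (cases "opev scale A q' x0 = 0")
      case True
      then show ?thesis using less.hyps[of q'] deg q0 by auto
    next
      case False
      have "A (opev scale A q' x0) - r *s opev scale A q' x0 = 0" using less.prems(2) q pe_mult[OF lin] by simp
      then show ?thesis using False by (intro exI[of _ r] exI[of _ "opev scale A q' x0"]) auto
    qed
  qed
qed

lemma eigen_exists:
  assumes lin: "Vector_Spaces.linear scale scale A"
    and ac: "\<And>q :: 'a poly. degree q > 0 \<Longrightarrow> \<exists>r. poly q r = 0"
    and x0: "x0 \<noteq> 0" and N: "N > 0" and fx: "(A^^N) x0 = x0"
  shows "\<exists>z y. y \<noteq> 0 \<and> A y = z *s y"
proof -
  have "monom (1::'a) N - 1 \<noteq> 0"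
  proof
    assume "monom (1::'a) N - 1 = 0"
    then have "coeff (monom (1::'a) N - 1) N = 0" by simp
    then show False using N by (simp add: coeff_monom)
  qed
  moreover have "opev scale A (monom 1 N - 1) x0 = 0" using pe_monom[OF N] fx by simp
  ultimately show ?thesis using eigen_from_poly[OF lin ac x0] by blast
qed

end


locale rp = uqs p v \<sigma> for p and v :: "'e::field \<Rightarrow> int" and \<sigma> +
  fixes scale :: "'k::field \<Rightarrow> 'v::ab_group_add \<Rightarrow> 'v" and \<rho> :: "'e mat2 \<Rightarrow> 'v \<Rightarrow> 'v"
  assumes fp: "is_Fpbar p TYPE('k)"
    and rep: "is_rep scale (U11 \<sigma>) \<rho>"
    and sm: "is_smooth v (U11 \<sigma>) \<rho>"
    and irr: "irred_subrep scale (U11 \<sigma>) \<rho> UNIV"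
begin

lemma VS: "vector_space scale" using rep by (simp add: is_rep_def)
lemma lin: "g \<in> U11 \<sigma> \<Longrightarrow> Vector_Spaces.linear scale scale (\<rho> g)" using rep by (simp add: is_rep_def)
lemma mh: "g \<in> U11 \<sigma> \<Longrightarrow> module_hom scale scale (\<rho> g)" using lin by (simp add: linear_iff_module_hom)
lemma rone[simp]: "\<rho> m2_one x = x" using rep by (simp add: is_rep_def)
lemma rmult: "g \<in> U11 \<sigma> \<Longrightarrow> h \<in> U11 \<sigma> \<Longrightarrow> \<rho> (m2_mult g h) x = \<rho> g (\<rho> h x)"
  using rep by (simp add: is_rep_def)
lemma ac: "degree (q :: 'k poly) > 0 \<Longrightarrow> \<exists>r. poly q r = 0"
  using fp by (simp add: is_Fpbar_def)
lemma MOD: "module scale" using VS by (simp add: module_iff_vector_space)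

lemma rlinear:
  assumes "g \<in> U11 \<sigma>"
  shows "\<rho> g (x + y) = \<rho> g x + \<rho> g y" "\<rho> g (scale c x) = scale c (\<rho> g x)"
    "\<rho> g 0 = 0" "\<rho> g (x - y) = \<rho> g x - \<rho> g y"
  using module_hom.add[OF mh[OF assms]] module_hom.scale[OF mh[OF assms]]
    module_hom.zero[OF mh[OF assms]] module_hom.diff[OF mh[OF assms]] by auto

lemma subspace_iff: "module.subspace scale W \<longleftrightarrow>
   0 \<in> W \<and> (\<forall>x\<in>W. \<forall>y\<in>W. x + y \<in> W) \<and> (\<forall>c. \<forall>x\<in>W. scale c x \<in> W)"
  by (simp add: module.subspace_def[OF MOD])

lemma irrG: "stable_subspace scale (U11 \<sigma>) \<rho> W \<Longrightarrow> W = {0} \<or> W = UNIV"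
  using irr by (simp add: irred_subrep_def)

lemma nontriv: "\<exists>x0::'v. x0 \<noteq> 0"
proof -
  have "(UNIV::'v set) \<noteq> {0}" using irr by (simp add: irred_subrep_def)
  then show ?thesis by blast
qed

lemma stable_nz: "stable_subspace scale (U11 \<sigma>) \<rho> W \<Longrightarrow> x \<in> W \<Longrightarrow> x \<noteq> 0 \<Longrightarrow> W = UNIV"
  using irrG by blast

lemma center_comm: "c \<in> group_center (U11 \<sigma>) \<Longrightarrow> g \<in> U11 \<sigma> \<Longrightarrow> \<rho> c (\<rho> g x) = \<rho> g (\<rho> c x)"
proof -
  assume c: "c \<in> group_center (U11 \<sigma>)" and g: "g \<in> U11 \<sigma>"
  have cU: "c \<in> U11 \<sigma>" and cm: "m2_mult c g = m2_mult g c" using c g by (auto simp: group_center_def)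
  have "\<rho> c (\<rho> g x) = \<rho> (m2_mult c g) x" using rmult[OF cU g] by simp
  also have "\<dots> = \<rho> g (\<rho> c x)" using cm rmult[OF g cU] by simp
  finally show ?thesis .
qed

lemma eigenspace_stable:
  assumes c: "c \<in> group_center (U11 \<sigma>)"
  shows "stable_subspace scale (U11 \<sigma>) \<rho> {x. \<rho> c x = scale z x}"
proof -
  have cU: "c \<in> U11 \<sigma>" using c by (simp add: group_center_def)
  show ?thesis unfolding stable_subspace_def subspace_iff
    using rlinear[OF cU] center_comm[OF c] rlinear
    by (auto simp: module.scale_right_distrib[OF MOD] module.scale_left_commute[OF MOD]
        module.scale_zero_right[OF MOD])
qed

lemma v_E1: "l * \<sigma> l = 1 \<Longrightarrow> v l = 0"
proof -
  assume l: "l * \<sigma> l = 1"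
  then have "l \<noteq> 0" by (rule E1_nz)
  then have "v (l * \<sigma> l) = 2 * v l" by (simp add: vmult vs)
  with l show ?thesis by simp
qed

lemma E1_pow: "l * \<sigma> l = 1 \<Longrightarrow> l^k * \<sigma> (l^k) = 1"
  by (simp add: spow power_mult_distrib[symmetric])

lemma rsc_pow: assumes l: "l * \<sigma> l = 1" shows "\<rho> (sc (l^k)) = (\<rho> (sc l))^^k"
proof (induction k)
  case 0 then show ?case by (simp add: sc_one)
next
  case (Suc k)
  show ?case
  proof
    fix x
    have "\<rho> (sc (l ^ Suc k)) x = \<rho> (sc l) (\<rho> (sc (l^k)) x)"
      using rmult[OF sc_U11[OF l] sc_U11[OF E1_pow[OF l, of k]]] unfolding sc_mult by simp
    then show "\<rho> (sc (l ^ Suc k)) x = (\<rho> (sc l) ^^ Suc k) x" using Suc by simp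
  qed
qed

lemma central_scalar:
  assumes zc: "z \<in> group_center (U11 \<sigma>)"
  shows "\<exists>c. c \<noteq> 0 \<and> (\<forall>x. \<rho> z x = scale c x)"
proof -
  obtain l where zl: "z = sc l" and l: "l * \<sigma> l = 1" using center_sc[OF zc] by blast
  have l0: "l \<noteq> 0" using l by (rule E1_nz)
  have vl: "v l = 0" using l by (rule v_E1)
  obtain M where M: "M > 0" "vg 1 (l^M - 1)" using pigeon[OF l0 vl] by blast
  obtain x0 :: 'v where x0: "x0 \<noteq> 0" using nontriv by blast
  obtain n where n: "\<And>g. g \<in> U11 \<sigma> \<inter> congr_sub v n \<Longrightarrow> \<rho> g x0 = x0"
    using sm unfolding is_smooth_def by blast
  define N where "N = M * p^n"
  have N: "N > 0" using M p2 by (simp add: N_def)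
  have "vg (int n + 1) ((l^M)^(p^n) - 1)" using ppow[OF M(2)] .
  then have lN: "vg (int n) (l^N - 1)" by (auto simp: N_def power_mult intro: vg_mono)
  have scU: "sc (l^N) \<in> U11 \<sigma>" using sc_U11[OF E1_pow[OF l]] .
  have "sc (l^N) \<in> congr_sub v n"
    using lN l0 by (simp add: congr_sub_def sc_def m2_det_def)
  then have fx: "\<rho> (sc (l^N)) x0 = x0" using n scU by blast
  have cN: "sc (l^N) \<in> group_center (U11 \<sigma>)" using sc_center[OF E1_pow[OF l]] .
  have st: "stable_subspace scale (U11 \<sigma>) \<rho> {x. \<rho> (sc (l^N)) x = scale 1 x}"
    by (rule eigenspace_stable[OF cN])
  have "{x. \<rho> (sc (l^N)) x = scale 1 x} = UNIV"
    by (rule stable_nz[OF st, of x0]) (use fx x0 in \<open>simp_all add: module.scale_one[OF MOD]\<close>)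
  then have allfix: "((\<rho> z)^^N) x0 = x0" using rsc_pow[OF l, of N] zl fx by simp
  have zU: "z \<in> U11 \<sigma>" using zc by (simp add: group_center_def)
  obtain c y where cy: "y \<noteq> 0" "\<rho> z y = scale c y"
    using vector_space.eigen_exists[OF VS lin[OF zU] ac x0 N allfix] by blast
  have all: "{x. \<rho> z x = scale c x} = UNIV"
    using stable_nz[OF eigenspace_stable[OF zc], of y] cy by simp
  have il: "inverse l * \<sigma> (inverse l) = 1" using l l0
    by (simp add: sinverse) (metis inverse_mult_distrib inverse_1)
  have bk: "\<rho> (sc (inverse l)) (\<rho> z y) = y"
  proof -
    have "\<rho> (sc (inverse l)) (\<rho> z y) = \<rho> (sc (inverse l * l)) y"
      using rmult[OF sc_U11[OF il] zU, of y] zl sc_mult[of "inverse l" l] by simp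
    then show ?thesis using l0 by (simp add: sc_one)
  qed
  have c0: "c \<noteq> 0"
  proof
    assume "c = 0"
    then have "\<rho> z y = 0" using cy by (simp add: module.scale_zero_left[OF MOD])
    then have "y = 0" using bk rlinear(3)[OF sc_U11[OF il]] by simp
    then show False using cy(1) by simp
  qed
  show ?thesis using all c0 by blast
qed

end


context rp begin

definition chi :: "'e mat2 \<Rightarrow> 'k" where
  "chi z = (SOME c. c \<noteq> 0 \<and> (\<forall>x. \<rho> z x = scale c x))"

lemma chi: "z \<in> group_center (U11 \<sigma>) \<Longrightarrow> chi z \<noteq> 0 \<and> (\<forall>x. \<rho> z x = scale (chi z) x)"
  unfolding chi_def by (rule someI_ex) (rule central_scalar)

lemma center_mult: assumes "z \<in> group_center (U11 \<sigma>)" "z' \<in> group_center (U11 \<sigma>)"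
  shows "m2_mult z z' \<in> group_center (U11 \<sigma>)"
proof -
  have U: "z \<in> U11 \<sigma>" "z' \<in> U11 \<sigma>" using assms by (auto simp: group_center_def)
  have cz: "\<And>g. g \<in> U11 \<sigma> \<Longrightarrow> m2_mult z g = m2_mult g z"
    and cz': "\<And>g. g \<in> U11 \<sigma> \<Longrightarrow> m2_mult z' g = m2_mult g z'"
    using assms by (auto simp: group_center_def)
  have "m2_mult (m2_mult z z') g = m2_mult g (m2_mult z z')" if g: "g \<in> U11 \<sigma>" for g
  proof -
    have "m2_mult (m2_mult z z') g = m2_mult z (m2_mult z' g)" by (rule m2_mult_assoc)
    also have "\<dots> = m2_mult z (m2_mult g z')" using cz'[OF g] by simp
    also have "\<dots> = m2_mult (m2_mult z g) z'" by (rule m2_mult_assoc[symmetric])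
    also have "\<dots> = m2_mult (m2_mult g z) z'" using cz[OF g] by simp
    also have "\<dots> = m2_mult g (m2_mult z z')" by (rule m2_mult_assoc)
    finally show ?thesis .
  qed
  then show ?thesis using mult_U11[OF U] unfolding group_center_def by blast
qed

theorem central_char: "has_central_character scale (U11 \<sigma>) \<rho>"
  unfolding has_central_character_def
proof (intro exI[of _ chi] conjI ballI allI)
  fix z assume "z \<in> group_center (U11 \<sigma>)" then show "chi z \<noteq> 0" using chi by blast
next
  fix z x assume "z \<in> group_center (U11 \<sigma>)" then show "\<rho> z x = scale (chi z) x" using chi by blast
next
  fix z z' assume z: "z \<in> group_center (U11 \<sigma>)" and z': "z' \<in> group_center (U11 \<sigma>)"
  obtain x0 :: 'v where x0: "x0 \<noteq> 0" using nontriv by blast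
  have U: "z \<in> U11 \<sigma>" "z' \<in> U11 \<sigma>" using z z' by (auto simp: group_center_def)
  have "scale (chi (m2_mult z z')) x0 = \<rho> (m2_mult z z') x0" using chi[OF center_mult[OF z z']] by simp
  also have "\<dots> = \<rho> z (\<rho> z' x0)" by (rule rmult[OF U])
  also have "\<dots> = scale (chi z * chi z') x0" using chi[OF z] chi[OF z'] by (simp add: module.scale_scale[OF MOD])
  finally have "scale (chi (m2_mult z z')) x0 = scale (chi z * chi z') x0" .
  then show "chi (m2_mult z z') = chi z * chi z'"
    by (rule vector_space.scale_right_imp_eq[OF VS x0])
qed

end


context uqs begin

section \<open>Hensel-type lemma: 1 + m is a square\<close>

lemma vg0_mult: "vg 0 a \<Longrightarrow> vg n b \<Longrightarrow> vg n (a * b)"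
  using vg_mult[of 0 a n b] by simp

lemma hensel1: assumes x1: "vg 1 (x - 1)" shows "\<exists>y. y^2 = x"
proof -
  define h where "h = (p - 1) div 2"
  have ph: "p = 2 * h + 1" using podd p2 unfolding h_def by presburger
  define e where "e m = (p^m + 1) div 2" for m
  have podd_pow: "odd (p^m)" for m using podd by simp
  have e2: "2 * e m = p^m + 1" for m using podd_pow[of m] unfolding e_def by presburger
  have eS: "e (Suc m) = e m + p^m * h" for m
  proof -
    have "2 * e (Suc m) = 2 * (e m + p^m * h)" using e2[of m] e2[of "Suc m"] ph
      by (simp add: algebra_simps)
    then show ?thesis by simp
  qed
  define y where "y m = x^(e m)" for m
  have x0: "vg 0 x" using vg0_of_vg1[OF x1] by simp
  have y0: "vg 0 (y m)" for m unfolding y_def using vg_pow[OF x0, of "e m"] by simp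
  have step: "vg (int m + 1) (y (Suc m) - y m)" for m
  proof -
    have w: "vg (int m + 1) (x^(p^m) - 1)" by (rule ppow[OF x1])
    have "vg (int m + 1) ((x^(p^m))^h - 1)" by (rule powclose[OF w]) simp
    then have "vg (int m + 1) (y m * ((x^(p^m))^h - 1))" using vg0_mult y0 by blast
    moreover have "y (Suc m) = y m * (x^(p^m))^h"
      by (simp add: y_def eS power_add power_mult)
    ultimately show ?thesis by (simp add: algebra_simps)
  qed
  have cauchy0: "m \<ge> M \<Longrightarrow> vg (int M + 1) (y m - y M)" for m M
  proof (induction m rule: dec_induct)
    case base then show ?case by simp
  next
    case (step m)
    have "vg (int M + 1) (y (Suc m) - y m)" using step(1) vg_mono[OF \<open>vg (int m + 1) (y (Suc m) - y m)\<close>] 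
      by simp
    then have "vg (int M + 1) ((y (Suc m) - y m) + (y m - y M))" using step(3) vg_add by blast
    then show ?case by simp
  qed
  have "\<exists>M. \<forall>m\<ge>M. \<forall>n\<ge>M. vg N (y m - y n)" for N
  proof (intro exI[of _ "nat N"] allI impI)
    fix m n assume "m \<ge> nat N" "n \<ge> nat N"
    then have "vg (int (nat N) + 1) ((y m - y (nat N)) - (y n - y (nat N)))"
      using cauchy0 vg_diff by blast
    then show "vg N (y m - y n)" by (auto intro: vg_mono)
  qed
  then obtain L where L: "\<And>N. \<exists>M. \<forall>n\<ge>M. vg N (y n - L)"
    using complete unfolding val_complete_def by blast
  have "vg N (L^2 - x)" if N: "N \<ge> 0" for N
  proof -
    obtain M where M: "\<And>n. n \<ge> M \<Longrightarrow> vg N (y n - L)" using L by blast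
    define n where "n = max M (nat N)"
    have a: "vg N (y n - L)" using M by (simp add: n_def)
    have b: "vg 0 (L + y n)"
    proof -
      have "vg 0 (y n - L)" using a N by (auto intro: vg_mono)
      moreover have "vg 0 (2 * y n)" using vg0_mult[OF vg_of_nat[of 2] y0] by simp
      ultimately have "vg 0 (2 * y n - (y n - L))" using vg_diff by blast
      then show ?thesis by (simp add: algebra_simps)
    qed
    have c: "vg N ((L - y n) * (L + y n))" using vg_mult[of N "L - y n" 0 "L + y n"] a b
      by (simp add: vg_neg[of N "y n - L", symmetric])
    have ysq: "(y n)^2 = x * x^(p^n)"
      using e2[of n] by (simp add: y_def power_mult[symmetric] power_add mult.commute)
    have "vg (int n + 1) (x^(p^n) - 1)" by (rule ppow[OF x1])
    then have "vg (int n + 1) (x * (x^(p^n) - 1))" using vg0_mult[OF x0] by blast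
    then have "vg (int n + 1) ((y n)^2 - x)" using ysq by (simp add: algebra_simps)
    then have d: "vg N ((y n)^2 - x)" by (rule vg_mono) (simp add: n_def)
    have "vg N ((L - y n) * (L + y n) + ((y n)^2 - x))" using c d vg_add by blast
    then show ?thesis by (simp add: algebra_simps power2_eq_square)
  qed
  then have "L^2 - x = 0" by (rule vg_all_zero)
  then show ?thesis by auto
qed

end


context uqs begin

definition Us :: "'e set" where "Us = {x. x \<noteq> 0 \<and> v x = 0}"
definition cl :: "'e \<Rightarrow> 'e set" where "cl x = {y \<in> Us. vg 1 (y - x)}"

lemma un_vg0: "x \<in> Us \<Longrightarrow> vg 0 x" by (simp add: Us_def val_ge_def)
lemma un_mult: "x \<in> Us \<Longrightarrow> y \<in> Us \<Longrightarrow> x * y \<in> Us" by (simp add: Us_def vmult)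
lemma un_neg: "x \<in> Us \<Longrightarrow> - x \<in> Us" by (simp add: Us_def)
lemma un_inv: "x \<in> Us \<Longrightarrow> inverse x \<in> Us" by (simp add: Us_def vinv)
lemma un_not1: "x \<in> Us \<Longrightarrow> \<not> vg 1 x" by (simp add: Us_def val_ge_def)
lemma vg1_sym: "vg n (x - y) \<Longrightarrow> vg n (y - x)"
  using vg_neg[of n "x - y"] by simp
lemma vg1_trans: "vg n (x - y) \<Longrightarrow> vg n (y - z) \<Longrightarrow> vg n (x - z)"
  using vg_add[of n "x - y" "y - z"] by simp

lemma cl_self: "x \<in> Us \<Longrightarrow> x \<in> cl x" by (simp add: cl_def)
lemma cl_eq: assumes "x \<in> Us" "y \<in> Us" shows "cl x = cl y \<longleftrightarrow> vg 1 (x - y)"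
proof
  assume "cl x = cl y" then show "vg 1 (x - y)" using cl_self[OF assms(1)] by (simp add: cl_def)
next
  assume a: "vg 1 (x - y)"
  show "cl x = cl y" unfolding cl_def using a vg1_trans vg1_sym by blast
qed

lemma mult_compat: assumes "vg 0 x" "vg 0 y'" "vg 1 (x - x')" "vg 1 (y - y')"
  shows "vg 1 (x * y - x' * y')"
proof -
  have "vg 1 (x * (y - y'))" using vg0_mult assms by blast
  moreover have "vg 1 (y' * (x - x'))" using vg0_mult assms by blast
  ultimately have "vg 1 (x * (y - y') + y' * (x - x'))" by (rule vg_add)
  then show ?thesis by (simp add: algebra_simps)
qed

lemma prod_vg1: assumes "vg 0 a" "vg 0 b" "vg 1 (a * b)" shows "vg 1 a \<or> vg 1 b"
proof (cases "a = 0 \<or> b = 0")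
  case True then show ?thesis by (auto simp: val_ge_def)
next
  case False
  then have "v a + v b \<ge> 1" "v a \<ge> 0" "v b \<ge> 0" using assms by (auto simp: val_ge_def vmult)
  then show ?thesis by (auto simp: val_ge_def)
qed

definition Qs :: "'e set set" where "Qs = cl ` Us"
definition SQ :: "'e set set" where "SQ = (\<lambda>t. cl (t^2)) ` Us"

lemma un_sq: "t \<in> Us \<Longrightarrow> t^2 \<in> Us" by (simp add: power2_eq_square un_mult)

lemma SQ_sub: "SQ \<subseteq> Qs" using un_sq by (auto simp: SQ_def Qs_def)

lemma finite_Qs: "finite Qs"
proof -
  obtain R where R: "finite R" "R \<subseteq> val_ring v"
    "\<And>x. x \<in> val_ring v \<Longrightarrow> \<exists>r\<in>R. x - r \<in> val_ideal v"
    using resfin unfolding finite_residue_field_def by auto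
  have "Qs \<subseteq> cl ` R"
  proof
    fix C assume "C \<in> Qs"
    then obtain x where x: "x \<in> Us" "C = cl x" by (auto simp: Qs_def)
    have "x \<in> val_ring v" using x un_vg0 by (simp add: val_ring_def)
    then obtain r where r: "r \<in> R" "vg 1 (x - r)" using R(3) by (auto simp: val_ideal_def)
    have r0: "vg 0 r" using r R(2) by (auto simp: val_ring_def)
    have "r \<in> Us"
    proof (rule ccontr)
      assume "r \<notin> Us"
      then have "vg 1 r" using r0 by (auto simp: Us_def val_ge_def)
      then have "vg 1 ((x - r) + r)" using r vg_add by blast
      then show False using un_not1[OF x(1)] by simp
    qed
    then have "C = cl r" using x cl_eq r by blast
    then show "C \<in> cl ` R" using r by blast
  qed
  then show ?thesis using R(1) finite_subset by blast
qed

lemma sq_compat: "t \<in> Us \<Longrightarrow> t' \<in> Us \<Longrightarrow> vg 1 (t - t') \<Longrightarrow> vg 1 (t^2 - t'^2)"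
  using mult_compat[where x=t and x'=t' and y=t and y'=t'] un_vg0 by (simp add: power2_eq_square)

definition F :: "'e set \<Rightarrow> 'e set set" where
  "F s = {C. \<exists>t\<in>Us. C = cl t \<and> s = cl (t^2)}"

lemma F_eq: assumes u: "u \<in> Us" shows "F (cl (u^2)) = {cl u, cl (- u)}"
proof
  show "F (cl (u^2)) \<subseteq> {cl u, cl (- u)}"
  proof
    fix C assume "C \<in> F (cl (u^2))"
    then obtain t where t: "t \<in> Us" "C = cl t" "cl (u^2) = cl (t^2)" by (auto simp: F_def)
    then have "vg 1 (t^2 - u^2)" using cl_eq un_sq u by blast
    then have "vg 1 ((t - u) * (t + u))" by (simp add: algebra_simps power2_eq_square)
    moreover have "vg 0 (t - u)" "vg 0 (t + u)" using un_vg0 t u vg_diff vg_add by blast+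
    ultimately have "vg 1 (t - u) \<or> vg 1 (t - (- u))" using prod_vg1 by fastforce
    then show "C \<in> {cl u, cl (- u)}" using cl_eq t u un_neg by blast
  qed
next
  show "{cl u, cl (- u)} \<subseteq> F (cl (u^2))"
    using u un_neg unfolding F_def by force
qed

lemma cl_neg_ne: assumes u: "u \<in> Us" shows "cl u \<noteq> cl (- u)"
proof
  assume "cl u = cl (- u)"
  then have "vg 1 (u - - u)" using cl_eq u un_neg by blast
  then have "vg 1 (2 * u)" by simp
  moreover have "2 * u \<in> Us" using u two_unit by (simp add: Us_def vmult)
  ultimately show False using un_not1 by blast
qed

lemma card_Qs: "card Qs = 2 * card SQ"
proof -
  have fin: "finite SQ" using finite_Qs SQ_sub finite_subset by blast
  have U: "Qs = (\<Union>s\<in>SQ. F s)"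
  proof
    show "Qs \<subseteq> (\<Union>s\<in>SQ. F s)" unfolding Qs_def SQ_def F_def by blast
    show "(\<Union>s\<in>SQ. F s) \<subseteq> Qs" unfolding Qs_def SQ_def F_def by blast
  qed
  have disj: "\<forall>s\<in>SQ. \<forall>s'\<in>SQ. s \<noteq> s' \<longrightarrow> F s \<inter> F s' = {}"
  proof (intro ballI impI)
    fix s s' assume "s \<in> SQ" "s' \<in> SQ" "s \<noteq> s'"
    show "F s \<inter> F s' = {}"
    proof (rule ccontr)
      assume "F s \<inter> F s' \<noteq> {}"
      then obtain t t' where tt: "t \<in> Us" "t' \<in> Us" "cl t = cl t'" "s = cl (t^2)" "s' = cl (t'^2)"
        by (auto simp: F_def)
      then have "vg 1 (t - t')" using cl_eq by blast
      then have "vg 1 (t^2 - t'^2)" using sq_compat tt by blast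
      then have "s = s'" using tt cl_eq un_sq by blast
      with \<open>s \<noteq> s'\<close> show False by simp
    qed
  qed
  have c2: "card (F s) = 2" if sS: "s \<in> SQ" for s
  proof -
    obtain u where u: "u \<in> Us" "s = cl (u^2)" using sS unfolding SQ_def by blast
    show ?thesis using F_eq[OF u(1)] cl_neg_ne[OF u(1)] u(2) by simp
  qed
  have "card Qs = (\<Sum>s\<in>SQ. card (F s))"
    unfolding U by (rule card_UN_disjoint[OF fin _ disj]) (use F_eq in \<open>auto simp: SQ_def\<close>)
  also have "\<dots> = (\<Sum>s\<in>SQ. 2)" using c2 by simp
  finally show ?thesis by simp
qed

definition cmul :: "'e \<Rightarrow> 'e set \<Rightarrow> 'e set" where
  "cmul a C = {y \<in> Us. \<exists>c\<in>C. vg 1 (y - a * c)}"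

lemma cmul_cl: assumes "a \<in> Us" "t \<in> Us" shows "cmul a (cl t) = cl (a * t)"
proof
  show "cmul a (cl t) \<subseteq> cl (a * t)"
  proof
    fix y assume "y \<in> cmul a (cl t)"
    then obtain c where c: "y \<in> Us" "c \<in> Us" "vg 1 (c - t)" "vg 1 (y - a * c)"
      by (auto simp: cmul_def cl_def)
    have "vg 1 (a * c - a * t)" using mult_compat[where x=a and x'=a and y=c and y'=t] c assms un_vg0 by simp
    then show "y \<in> cl (a * t)" using c vg1_trans by (auto simp: cl_def)
  qed
  show "cl (a * t) \<subseteq> cmul a (cl t)"
    using assms cl_self unfolding cmul_def cl_def by fastforce
qed

lemma sq_iff: "c \<in> Us \<Longrightarrow> cl c \<in> SQ \<longleftrightarrow> (\<exists>t\<in>Us. vg 1 (c - t^2))"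
  unfolding SQ_def using cl_eq un_sq by blast

lemma res_tri: assumes a: "a \<in> Us" and b: "b \<in> Us" and na: "cl a \<notin> SQ" and nb: "cl b \<notin> SQ"
  shows "cl (a * b) \<in> SQ"
proof -
  have finQ: "finite Qs" by (rule finite_Qs)
  have img: "cmul a ` SQ \<subseteq> Qs - SQ"
  proof
    fix D assume "D \<in> cmul a ` SQ"
    then obtain t where t: "t \<in> Us" "D = cl (a * t^2)" using cmul_cl a un_sq by (auto simp: SQ_def)
    have "D \<in> Qs" using t a un_mult un_sq by (auto simp: Qs_def)
    moreover have "D \<notin> SQ"
    proof
      assume "D \<in> SQ"
      then obtain u where u: "u \<in> Us" "D = cl (u^2)" by (auto simp: SQ_def)
      then have "vg 1 (a * t^2 - u^2)" using t cl_eq un_mult un_sq a by metis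
      moreover have it: "inverse t \<in> Us" using un_inv t by blast
      ultimately have "vg 1 ((inverse t)^2 * (a * t^2 - u^2))"
        using vg0_mult un_vg0 un_sq by blast
      moreover have "(inverse t)^2 * (a * t^2 - u^2) = a - (u * inverse t)^2"
        using t by (simp add: Us_def field_simps power2_eq_square)
      ultimately have "vg 1 (a - (u * inverse t)^2)" by simp
      then have "cl a \<in> SQ" using sq_iff[OF a] un_mult[OF u(1) it] by blast
      with na show False by simp
    qed
    ultimately show "D \<in> Qs - SQ" by blast
  qed
  have inj: "inj_on (cmul a) SQ"
  proof
    fix C D assume CD: "C \<in> SQ" "D \<in> SQ" and e: "cmul a C = cmul a D"
    have "C \<in> cl ` Us" "D \<in> cl ` Us" using CD SQ_sub unfolding Qs_def by blast+
    then obtain s t where st: "s \<in> Us" "t \<in> Us" "C = cl s" "D = cl t" by blast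
    have "cl (a * s) = cl (a * t)" using e st cmul_cl a by simp
    then have "vg 1 (a * s - a * t)" using cl_eq un_mult a st by blast
    then have "vg 1 (inverse a * (a * s - a * t))" using vg0_mult un_vg0 un_inv a by blast
    moreover have "inverse a * (a * s - a * t) = s - t" using a by (simp add: Us_def field_simps)
    ultimately have "vg 1 (s - t)" by simp
    then show "C = D" using st cl_eq by blast
  qed
  have "card (cmul a ` SQ) = card SQ" using card_image[OF inj] .
  also have "\<dots> = card (Qs - SQ)" using card_Qs card_Diff_subset[OF _ SQ_sub] finQ
    finite_subset[OF SQ_sub] by simp
  finally have "cmul a ` SQ = Qs - SQ"
    using card_subset_eq[OF _ img] finQ by blast
  moreover have "cl b \<in> Qs - SQ" using b nb by (auto simp: Qs_def)
  ultimately have "cl b \<in> cmul a ` SQ" by simp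
  then obtain t where t0: "t \<in> Us" "cl b = cmul a (cl (t^2))" unfolding SQ_def by blast
  then have t: "t \<in> Us" "cl b = cl (a * t^2)" using cmul_cl a un_sq by auto
  then have "vg 1 (b - a * t^2)" using cl_eq b un_mult a un_sq by blast
  then have "vg 1 (a * (b - a * t^2))" using vg0_mult un_vg0 a by blast
  then have "vg 1 (a * b - (a * t)^2)" by (simp add: algebra_simps power2_eq_square)
  then show ?thesis using sq_iff un_mult[OF a b] un_mult[OF a t(1)] by blast
qed

end


context uqs begin

lemma unit_sq: assumes c: "c \<in> Us" and sq: "cl c \<in> SQ" shows "\<exists>y. c = y^2"
proof -
  obtain t where t: "t \<in> Us" "vg 1 (c - t^2)" using sq_iff[OF c] sq by blast
  have t0: "t \<noteq> 0" using t by (simp add: Us_def)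
  have "vg 1 (inverse (t^2) * (c - t^2))"
    using vg0_mult[OF un_vg0[OF un_inv[OF un_sq[OF t(1)]]] t(2)] .
  moreover have "inverse (t^2) * (c - t^2) = c / t^2 - 1" using t0 by (simp add: field_simps)
  ultimately obtain y where "y^2 = c / t^2" using hensel1 by auto
  then have "c = (y * t)^2" using t0 by (simp add: field_simps power_mult_distrib)
  then show ?thesis by blast
qed

lemma units_tri: assumes "c1 \<in> Us" "c2 \<in> Us"
  shows "(\<exists>y. c1 = y^2) \<or> (\<exists>y. c2 = y^2) \<or> (\<exists>y. c1 * c2 = y^2)"
  using res_tri[OF assms] unit_sq assms un_mult by blast

lemma normalize: assumes a: "a \<noteq> 0" shows "\<exists>f c. \<sigma> f = f \<and> f \<noteq> 0 \<and> c \<in> Us \<and> a = f * c"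
proof -
  obtain \<pi> where pi: "\<pi> \<noteq> 0" "\<sigma> \<pi> = \<pi>" "v \<pi> = 1" using unif by blast
  have "\<exists>f. \<sigma> f = f \<and> f \<noteq> 0 \<and> v f = v a"
  proof (cases "v a \<ge> 0")
    case True
    then show ?thesis using pi
      by (intro exI[of _ "\<pi> ^ nat (v a)"]) (simp add: spow vpow)
  next
    case False
    then show ?thesis using pi
      by (intro exI[of _ "inverse (\<pi> ^ nat (- v a))"]) (simp add: spow vpow vinv sinverse)
  qed
  then obtain f where f: "\<sigma> f = f" "f \<noteq> 0" "v f = v a" by blast
  have "a / f \<in> Us" using a f by (simp add: Us_def vdiv)
  moreover have "a = f * (a / f)" using f by simp
  ultimately show ?thesis using f by blast
qed

lemma hilbert90: assumes u: "u * \<sigma> u = 1" shows "\<exists>a. a \<noteq> 0 \<and> u = a / \<sigma> a"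
proof (cases "u = -1")
  case True
  obtain x where x: "\<sigma> x \<noteq> x" using snontriv by blast
  define b where "b = x - \<sigma> x"
  have b: "\<sigma> b = - b" "b \<noteq> 0" using x by (auto simp: b_def sdiff)
  then show ?thesis using True by (intro exI[of _ b]) simp
next
  case False
  have u0: "u \<noteq> 0" using u by (rule E1_nz)
  have su: "\<sigma> u = inverse u" using inverse_unique[OF u] by simp
  have a0: "1 + u \<noteq> 0" using False by (metis add.commute add_eq_0_iff)
  have "\<sigma> (1 + u) = (1 + u) / u" using su u0 by (simp add: sadd field_simps)
  then have "(1 + u) / \<sigma> (1 + u) = u" using a0 u0 by simp
  then show ?thesis using a0 by (intro exI[of _ "1 + u"]) simp
qed

definition E1sq :: "'e \<Rightarrow> bool" where "E1sq u \<longleftrightarrow> (\<exists>l. l * \<sigma> l = 1 \<and> u = l^2)"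

lemma ratio_sq: assumes "y \<noteq> 0" shows "E1sq (y^2 / \<sigma> (y^2))"
proof -
  have "(y / \<sigma> y) * \<sigma> (y / \<sigma> y) = 1" using assms by (simp add: sdivide)
  moreover have "y^2 / \<sigma> (y^2) = (y / \<sigma> y)^2" by (simp add: spow power_divide)
  ultimately show ?thesis unfolding E1sq_def by blast
qed

lemma ratio_norm: assumes "\<sigma> f = f" "f \<noteq> 0" shows "(f * c) / \<sigma> (f * c) = c / \<sigma> c"
  using assms by (simp add: smult)

lemma E1_tri: assumes u: "u * \<sigma> u = 1" and w: "w * \<sigma> w = 1"
  shows "E1sq u \<or> E1sq w \<or> E1sq (u * w)"
proof -
  obtain a where a: "a \<noteq> 0" "u = a / \<sigma> a" using hilbert90[OF u] by blast
  obtain b where b: "b \<noteq> 0" "w = b / \<sigma> b" using hilbert90[OF w] by blast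
  obtain f c where fc: "\<sigma> f = f" "f \<noteq> 0" "c \<in> Us" "a = f * c" using normalize[OF a(1)] by blast
  obtain g d where gd: "\<sigma> g = g" "g \<noteq> 0" "d \<in> Us" "b = g * d" using normalize[OF b(1)] by blast
  have uc: "u = c / \<sigma> c" using a fc ratio_norm by simp
  have wd: "w = d / \<sigma> d" using b gd ratio_norm by simp
  have uw: "u * w = (c * d) / \<sigma> (c * d)" using uc wd by (simp add: smult)
  have c0: "c \<noteq> 0" "d \<noteq> 0" using fc gd by (auto simp: Us_def)
  show ?thesis
    using units_tri[OF fc(3) gd(3)]
  proof (elim disjE exE)
    fix y assume "c = y^2" then show ?thesis using uc ratio_sq c0 by auto
  next
    fix y assume "d = y^2" then show ?thesis using wd ratio_sq c0 by auto
  next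
    fix y assume y: "c * d = y^2"
    then have "y \<noteq> 0" using c0 by auto
    then show ?thesis using y uw ratio_sq by auto
  qed
qed

end


context uqs begin

lemma E1sq_mult_sq: "E1sq a \<Longrightarrow> b * \<sigma> b = 1 \<Longrightarrow> E1sq (a * b^2)"
  unfolding E1sq_def
proof (elim exE conjE)
  fix l assume l: "l * \<sigma> l = 1" "a = l^2" and b: "b * \<sigma> b = 1"
  have "(l * b) * \<sigma> (l * b) = (l * \<sigma> l) * (b * \<sigma> b)" by (simp add: smult algebra_simps)
  then show "\<exists>l. l * \<sigma> l = 1 \<and> a * b^2 = l^2" using l b
    by (intro exI[of _ "l * b"]) (simp add: power_mult_distrib)
qed

lemma E1sq_sq: "b * \<sigma> b = 1 \<Longrightarrow> E1sq (b^2)"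
  unfolding E1sq_def by blast

lemma E1sq_one: "E1sq 1"
  using E1sq_sq[of 1] by simp

lemma E1_inv: "b * \<sigma> b = 1 \<Longrightarrow> inverse b * \<sigma> (inverse b) = 1"
  by (simp add: sinverse) (metis inverse_mult_distrib inverse_1)

definition d0 :: 'e where
  "d0 = (if \<exists>u. u * \<sigma> u = 1 \<and> \<not> E1sq u then SOME u. u * \<sigma> u = 1 \<and> \<not> E1sq u else 1)"

lemma d0_E1: "d0 * \<sigma> d0 = 1"
proof (cases "\<exists>u. u * \<sigma> u = 1 \<and> \<not> E1sq u")
  case True then show ?thesis unfolding d0_def using someI_ex[OF True] by simp
next
  case False
  have "d0 = 1" unfolding d0_def using False by (rule if_not_P)
  then show ?thesis by simp
qed

lemma classify: assumes u: "u * \<sigma> u = 1" shows "E1sq u \<or> E1sq (u * d0)"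
proof (cases "\<exists>u. u * \<sigma> u = 1 \<and> \<not> E1sq u")
  case True
  then have "d0 * \<sigma> d0 = 1 \<and> \<not> E1sq d0" unfolding d0_def using someI_ex[OF True] by simp
  then show ?thesis using E1_tri[OF u] by blast
next
  case False then show ?thesis using u by blast
qed

definition g0 :: "'e mat2" where
  "g0 = (let a = SOME a. a \<noteq> 0 \<and> d0 = a / \<sigma> a in M2 a 0 0 (inverse (\<sigma> a)))"

lemma g0: "g0 \<in> U11 \<sigma>" "m2_det g0 = d0"
proof -
  have ex: "\<exists>a. a \<noteq> 0 \<and> d0 = a / \<sigma> a" using hilbert90[OF d0_E1] .
  define a where "a = (SOME a. a \<noteq> 0 \<and> d0 = a / \<sigma> a)"
  have a: "a \<noteq> 0" "d0 = a / \<sigma> a" using someI_ex[OF ex] unfolding a_def by auto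
  have g: "g0 = M2 a 0 0 (inverse (\<sigma> a))" unfolding g0_def a_def Let_def by simp
  show "m2_det g0 = d0" using a by (simp add: g m2_det_def divide_inverse)
  show "g0 \<in> U11 \<sigma>" using a
    by (simp add: g U11_iff m2_det_def m2_star_def m2_mult_def m2_s_def sinverse)
qed

lemma SU_sub: "SU11 \<sigma> \<subseteq> U11 \<sigma>" by (auto simp: SU11_def)

end

context rp begin

lemma detE1: "g \<in> U11 \<sigma> \<Longrightarrow> m2_det g * \<sigma> (m2_det g) = 1" by (rule det_U11)

lemma typeA: assumes g: "g \<in> U11 \<sigma>" and sq: "E1sq (m2_det g)"
  shows "\<exists>c h. h \<in> SU11 \<sigma> \<and> (\<forall>x. \<rho> g x = scale c (\<rho> h x))"
proof -
  obtain l where l: "l * \<sigma> l = 1" "m2_det g = l^2" using sq unfolding E1sq_def by blast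
  have l0: "l \<noteq> 0" using l by (simp add: E1_nz)
  define h where "h = m2_mult (sc (inverse l)) g"
  have hU: "h \<in> U11 \<sigma>" unfolding h_def using mult_U11[OF sc_U11[OF E1_inv[OF l(1)]] g] .
  have "m2_det h = 1" unfolding h_def using l l0
    by (simp add: m2_det_mult det_sc power2_eq_square field_simps)
  then have hS: "h \<in> SU11 \<sigma>" using hU by (simp add: SU11_def)
  have gh: "g = m2_mult (sc l) h"
    unfolding h_def using l0 by (simp add: m2_mult_assoc[symmetric] sc_mult sc_one)
  have "\<rho> g x = scale (chi (sc l)) (\<rho> h x)" for x
    using rmult[OF sc_U11[OF l(1)] hU, of x] chi[OF sc_center[OF l(1)]] gh by simp
  then show ?thesis using hS by blast
qed

lemma typeB1: assumes g: "g \<in> U11 \<sigma>" and sq: "E1sq (m2_det g * d0)"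
  shows "\<exists>c h. h \<in> SU11 \<sigma> \<and> (\<forall>x. \<rho> g x = scale c (\<rho> g0 (\<rho> h x)))"
proof -
  have d00: "d0 \<noteq> 0" using d0_E1 E1_nz by blast
  define g' where "g' = m2_mult (m2_inv g0) g"
  have g'U: "g' \<in> U11 \<sigma>" unfolding g'_def using mult_U11[OF inv_U11[OF g0(1)] g] .
  have "m2_det g' = (m2_det g * d0) * (inverse d0)^2"
    unfolding g'_def using d00 g0 by (simp add: m2_det_mult det_inv power2_eq_square field_simps)
  then have "E1sq (m2_det g')" using E1sq_mult_sq[OF sq E1_inv[OF d0_E1]] by simp
  then obtain c h where ch: "h \<in> SU11 \<sigma>" "\<And>x. \<rho> g' x = scale c (\<rho> h x)"
    using typeA[OF g'U] by blast
  have gg: "g = m2_mult g0 g'"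
    unfolding g'_def using g0 d00 by (simp add: m2_mult_assoc[symmetric] m2_inv_right)
  have "\<rho> g x = scale c (\<rho> g0 (\<rho> h x))" for x
    using rmult[OF g0(1) g'U, of x] gg ch(2) rlinear(2)[OF g0(1)] by simp
  then show ?thesis using ch(1) by blast
qed

lemma typeB2: assumes g: "g \<in> U11 \<sigma>" and sq: "E1sq (m2_det g * d0)"
  shows "\<exists>c h. h \<in> SU11 \<sigma> \<and> (\<forall>x. \<rho> g x = scale c (\<rho> h (\<rho> g0 x)))"
proof -
  have d00: "d0 \<noteq> 0" using d0_E1 E1_nz by blast
  define g' where "g' = m2_mult g (m2_inv g0)"
  have g'U: "g' \<in> U11 \<sigma>" unfolding g'_def using mult_U11[OF g inv_U11[OF g0(1)]] .
  have "m2_det g' = (m2_det g * d0) * (inverse d0)^2"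
    unfolding g'_def using d00 g0 by (simp add: m2_det_mult det_inv power2_eq_square field_simps)
  then have "E1sq (m2_det g')" using E1sq_mult_sq[OF sq E1_inv[OF d0_E1]] by simp
  then obtain c h where ch: "h \<in> SU11 \<sigma>" "\<And>x. \<rho> g' x = scale c (\<rho> h x)"
    using typeA[OF g'U] by blast
  have gg: "g = m2_mult g' g0"
    unfolding g'_def using g0 d00 by (simp add: m2_mult_assoc m2_inv_left)
  have "\<rho> g x = scale c (\<rho> h (\<rho> g0 x))" for x
    using rmult[OF g'U g0(1), of x] gg ch(2) by simp
  then show ?thesis using ch(1) by blast
qed

lemma classifyG: "g \<in> U11 \<sigma> \<Longrightarrow> E1sq (m2_det g) \<or> E1sq (m2_det g * d0)"
  using classify det_U11 by blast

lemma detg0_A: "E1sq (m2_det g) \<Longrightarrow> E1sq (m2_det (m2_mult g g0) * d0)"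
  using E1sq_mult_sq[OF _ d0_E1] g0 by (simp add: m2_det_mult power2_eq_square mult.assoc)

lemma detg0_B: "E1sq (m2_det g * d0) \<Longrightarrow> E1sq (m2_det (m2_mult g g0))"
  using g0 by (simp add: m2_det_mult)

end


context rp begin

abbreviation SS where "SS W \<equiv> stable_subspace scale (SU11 \<sigma>) \<rho> W"
abbreviation GS where "GS W \<equiv> stable_subspace scale (U11 \<sigma>) \<rho> W"

lemma SS_D: "SS W \<Longrightarrow> 0 \<in> W" "SS W \<Longrightarrow> x \<in> W \<Longrightarrow> y \<in> W \<Longrightarrow> x + y \<in> W"
  "SS W \<Longrightarrow> x \<in> W \<Longrightarrow> scale c x \<in> W" "SS W \<Longrightarrow> h \<in> SU11 \<sigma> \<Longrightarrow> x \<in> W \<Longrightarrow> \<rho> h x \<in> W"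
  by (auto simp: stable_subspace_def subspace_iff)

lemma SS_diff: "SS W \<Longrightarrow> x \<in> W \<Longrightarrow> y \<in> W \<Longrightarrow> x - y \<in> W"
  using module.subspace_diff[OF MOD] by (auto simp: stable_subspace_def)

lemma GS_I: assumes "0 \<in> W" "\<And>x y. x \<in> W \<Longrightarrow> y \<in> W \<Longrightarrow> x + y \<in> W"
  "\<And>c x. x \<in> W \<Longrightarrow> scale c x \<in> W" "\<And>g x. g \<in> U11 \<sigma> \<Longrightarrow> x \<in> W \<Longrightarrow> \<rho> g x \<in> W"
  shows "GS W"
  using assms by (auto simp: stable_subspace_def subspace_iff)

lemma SS_I: assumes "0 \<in> W" "\<And>x y. x \<in> W \<Longrightarrow> y \<in> W \<Longrightarrow> x + y \<in> W"
  "\<And>c x. x \<in> W \<Longrightarrow> scale c x \<in> W" "\<And>g x. g \<in> SU11 \<sigma> \<Longrightarrow> x \<in> W \<Longrightarrow> \<rho> g x \<in> W"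
  shows "SS W"
  using assms by (auto simp: stable_subspace_def subspace_iff)

lemma L1: "SS W \<Longrightarrow> g \<in> U11 \<sigma> \<Longrightarrow> E1sq (m2_det g) \<Longrightarrow> w \<in> W \<Longrightarrow> \<rho> g w \<in> W"
  using typeA SS_D by metis

lemma L2: assumes "SS W" "g \<in> U11 \<sigma>" "E1sq (m2_det g * d0)" "w \<in> W"
  shows "\<rho> g w \<in> \<rho> g0 ` W"
proof -
  obtain c h where ch: "h \<in> SU11 \<sigma>" "\<And>x. \<rho> g x = scale c (\<rho> g0 (\<rho> h x))"
    using typeB1[OF assms(2,3)] by blast
  have "\<rho> g w = \<rho> g0 (scale c (\<rho> h w))" using ch(2) rlinear(2)[OF g0(1)] by simp
  moreover have "scale c (\<rho> h w) \<in> W" using SS_D assms ch by blast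
  ultimately show ?thesis by blast
qed

lemma L4: assumes "SS W" "g \<in> U11 \<sigma>" "E1sq (m2_det g)" "w \<in> W"
  shows "\<rho> g (\<rho> g0 w) \<in> \<rho> g0 ` W"
  using L2[OF assms(1) mult_U11[OF assms(2) g0(1)] detg0_A[OF assms(3)] assms(4)]
    rmult[OF assms(2) g0(1)] by simp

lemma L5: assumes "SS W" "g \<in> U11 \<sigma>" "E1sq (m2_det g * d0)" "w \<in> W"
  shows "\<rho> g (\<rho> g0 w) \<in> W"
  using L1[OF assms(1) mult_U11[OF assms(2) g0(1)] detg0_B[OF assms(3)] assms(4)]
    rmult[OF assms(2) g0(1)] by simp

lemma SU_det: "h \<in> SU11 \<sigma> \<Longrightarrow> E1sq (m2_det h)"
  using E1sq_one by (simp add: SU11_def)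

lemma L3: assumes W: "SS W" shows "SS (\<rho> g0 ` W)"
proof (rule SS_I)
  show "0 \<in> \<rho> g0 ` W" using SS_D(1)[OF W] rlinear(3)[OF g0(1)] by force
next
  fix x y assume "x \<in> \<rho> g0 ` W" "y \<in> \<rho> g0 ` W"
  then obtain a b where ab: "a \<in> W" "b \<in> W" "x = \<rho> g0 a" "y = \<rho> g0 b" by blast
  then have "x + y = \<rho> g0 (a + b)" using rlinear(1)[OF g0(1)] by simp
  moreover have "a + b \<in> W" using SS_D(2)[OF W] ab by blast
  ultimately show "x + y \<in> \<rho> g0 ` W" by blast
next
  fix c x assume "x \<in> \<rho> g0 ` W"
  then obtain a where a: "a \<in> W" "x = \<rho> g0 a" by blast
  then have "scale c x = \<rho> g0 (scale c a)" using rlinear(2)[OF g0(1)] by simp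
  moreover have "scale c a \<in> W" using SS_D(3)[OF W] a by blast
  ultimately show "scale c x \<in> \<rho> g0 ` W" by blast
next
  fix h x assume h: "h \<in> SU11 \<sigma>" and "x \<in> \<rho> g0 ` W"
  then obtain a where "a \<in> W" "x = \<rho> g0 a" by blast
  then show "\<rho> h x \<in> \<rho> g0 ` W" using L4[OF W _ SU_det[OF h]] h SU_sub by blast
qed

lemma g0_inj: "\<rho> g0 x = \<rho> g0 y \<Longrightarrow> x = y"
proof -
  assume e: "\<rho> g0 x = \<rho> g0 y"
  have d: "m2_det g0 \<noteq> 0" using g0(1) by (simp add: U11_iff)
  have "\<rho> (m2_inv g0) (\<rho> g0 z) = z" for z
    using rmult[OF inv_U11[OF g0(1)] g0(1), of z] m2_inv_left[OF d] by simp
  then show "x = y" using e by metis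
qed

lemma g0_nz: "x \<noteq> 0 \<Longrightarrow> \<rho> g0 x \<noteq> 0"
  using g0_inj rlinear(3)[OF g0(1)] by metis

lemma SS_sum: assumes A: "SS A" and B: "SS B"
  shows "SS {x. \<exists>a\<in>A. \<exists>b\<in>B. x = a + b}"
proof (rule SS_I)
  show "0 \<in> {x. \<exists>a\<in>A. \<exists>b\<in>B. x = a + b}" using SS_D(1)[OF A] SS_D(1)[OF B] by force
next
  fix x y assume "x \<in> {x. \<exists>a\<in>A. \<exists>b\<in>B. x = a + b}" "y \<in> {x. \<exists>a\<in>A. \<exists>b\<in>B. x = a + b}"
  then obtain a b a' b' where "a \<in> A" "b \<in> B" "a' \<in> A" "b' \<in> B" "x = a + b" "y = a' + b'" by blast
  then show "x + y \<in> {x. \<exists>a\<in>A. \<exists>b\<in>B. x = a + b}"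
    using SS_D(2)[OF A] SS_D(2)[OF B] by (intro CollectI bexI[of _ "a + a'"] bexI[of _ "b + b'"]) (auto simp: algebra_simps)
next
  fix c x assume "x \<in> {x. \<exists>a\<in>A. \<exists>b\<in>B. x = a + b}"
  then obtain a b where "a \<in> A" "b \<in> B" "x = a + b" by blast
  then show "scale c x \<in> {x. \<exists>a\<in>A. \<exists>b\<in>B. x = a + b}"
    using SS_D(3)[OF A] SS_D(3)[OF B] module.scale_right_distrib[OF MOD] by blast
next
  fix h x assume h: "h \<in> SU11 \<sigma>" and "x \<in> {x. \<exists>a\<in>A. \<exists>b\<in>B. x = a + b}"
  then obtain a b where "a \<in> A" "b \<in> B" "x = a + b" by blast
  then show "\<rho> h x \<in> {x. \<exists>a\<in>A. \<exists>b\<in>B. x = a + b}"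
    using SS_D(4)[OF A h] SS_D(4)[OF B h] rlinear(1) h SU_sub by blast
qed

lemma gen: assumes N: "SS N" and x0: "x0 \<in> N" "\<rho> g0 x0 \<in> N" and nz: "x0 \<noteq> 0" shows "N = UNIV"
proof -
  define L where "L = {w. \<forall>g\<in>U11 \<sigma>. \<rho> g w \<in> N}"
  have GL: "GS L"
  proof (rule GS_I)
    show "0 \<in> L" using SS_D(1)[OF N] rlinear(3) by (simp add: L_def)
  next
    fix x y assume "x \<in> L" "y \<in> L" then show "x + y \<in> L"
      using SS_D(2)[OF N] rlinear(1) by (simp add: L_def)
  next
    fix c x assume "x \<in> L" then show "scale c x \<in> L"
      using SS_D(3)[OF N] rlinear(2) by (simp add: L_def)
  next
    fix g x assume "g \<in> U11 \<sigma>" "x \<in> L" then show "\<rho> g x \<in> L"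
      using mult_U11 rmult by (simp add: L_def) (metis rmult)
  qed
  have "x0 \<in> L" unfolding L_def
  proof (rule CollectI, intro ballI)
    fix g assume g: "g \<in> U11 \<sigma>"
    show "\<rho> g x0 \<in> N"
    proof (cases "E1sq (m2_det g)")
      case True
      then obtain c h where "h \<in> SU11 \<sigma>" "\<And>x. \<rho> g x = scale c (\<rho> h x)" using typeA g by blast
      then show ?thesis using SS_D(3,4)[OF N] x0 by simp
    next
      case False
      then have "E1sq (m2_det g * d0)" using classifyG g by blast
      then obtain c h where "h \<in> SU11 \<sigma>" "\<And>x. \<rho> g x = scale c (\<rho> h (\<rho> g0 x))"
        using typeB2 g by blast
      then show ?thesis using SS_D(3,4)[OF N] x0 by simp
    qed
  qed
  then have "L = UNIV" using stable_nz[OF GL] nz by blast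
  moreover have "L \<subseteq> N" unfolding L_def using one_U11 by force
  ultimately show ?thesis by blast
qed

end


context rp begin

lemma SS_zero: "SS {0}"
  by (rule SS_I) (use rlinear(3) SU_sub module.scale_zero_right[OF MOD] in auto)

lemma exists_max: assumes x0: "x0 \<noteq> 0"
  shows "\<exists>M. SS M \<and> \<not> (x0 \<in> M \<and> \<rho> g0 x0 \<in> M) \<and>
    (\<forall>X. SS X \<and> \<not> (x0 \<in> X \<and> \<rho> g0 x0 \<in> X) \<and> M \<subseteq> X \<longrightarrow> X = M)"
proof -
  define P where "P = {W. SS W \<and> \<not> (x0 \<in> W \<and> \<rho> g0 x0 \<in> W)}"
  have "P \<noteq> {}" using SS_zero x0 unfolding P_def by blast
  moreover have "\<Union>C \<in> P" if C: "C \<noteq> {}" "subset.chain P C" for C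
  proof -
    have CP: "C \<subseteq> P" and ch: "\<And>A B. A \<in> C \<Longrightarrow> B \<in> C \<Longrightarrow> A \<subseteq> B \<or> B \<subseteq> A"
      using C(2) unfolding subset.chain_def by auto
    have SSC: "\<And>A. A \<in> C \<Longrightarrow> SS A" using CP unfolding P_def by blast
    have "SS (\<Union>C)"
    proof (rule SS_I)
      show "0 \<in> \<Union>C" using C(1) SSC SS_D(1) by blast
    next
      fix x y assume "x \<in> \<Union>C" "y \<in> \<Union>C"
      then obtain A B where AB: "A \<in> C" "B \<in> C" "x \<in> A" "y \<in> B" by blast
      then show "x + y \<in> \<Union>C" using ch[OF AB(1,2)] SSC SS_D(2) by blast
    next
      fix c x assume "x \<in> \<Union>C" then show "scale c x \<in> \<Union>C" using SSC SS_D(3) by blast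
    next
      fix h x assume "h \<in> SU11 \<sigma>" "x \<in> \<Union>C" then show "\<rho> h x \<in> \<Union>C" using SSC SS_D(4) by blast
    qed
    moreover have "\<not> (x0 \<in> \<Union>C \<and> \<rho> g0 x0 \<in> \<Union>C)"
    proof
      assume "x0 \<in> \<Union>C \<and> \<rho> g0 x0 \<in> \<Union>C"
      then obtain A B where AB: "A \<in> C" "B \<in> C" "x0 \<in> A" "\<rho> g0 x0 \<in> B" by blast
      then have "A \<in> P" "B \<in> P" using CP by auto
      then show False using ch[OF AB(1,2)] AB unfolding P_def by blast
    qed
    ultimately show ?thesis unfolding P_def by blast
  qed
  ultimately obtain M where "M \<in> P" "\<forall>X\<in>P. M \<subseteq> X \<longrightarrow> X = M"
    using subset_Zorn_nonempty[of P] by blast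
  then show ?thesis unfolding P_def by blast
qed

theorem semisimple: "semisimple_length_le2 scale (SU11 \<sigma>) \<rho>"
proof -
  obtain x0 :: 'v where x0: "x0 \<noteq> 0" using nontriv by blast
  from exists_max[OF x0] obtain M where SM: "SS M" and nb: "\<not> (x0 \<in> M \<and> \<rho> g0 x0 \<in> M)"
    and mx': "\<forall>X. SS X \<and> \<not> (x0 \<in> X \<and> \<rho> g0 x0 \<in> X) \<and> M \<subseteq> X \<longrightarrow> X = M"
    by (elim exE conjE) (rule that)
  have mx: "X = M" if "SS X" "\<not> (x0 \<in> X \<and> \<rho> g0 x0 \<in> X)" "M \<subseteq> X" for X
    using mx' that by blast
  have maxM: "X = UNIV" if "SS X" "M \<subseteq> X" "X \<noteq> M" for X
  proof (rule ccontr)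
    assume "X \<noteq> UNIV"
    then have "\<not> (x0 \<in> X \<and> \<rho> g0 x0 \<in> X)" using gen[OF that(1) _ _ x0] by blast
    then have "X = M" using mx[OF that(1) _ that(2)] by simp
    with that(3) show False by simp
  qed
  have MU: "M \<noteq> UNIV" using nb by blast
  have SgM: "SS (\<rho> g0 ` M)" by (rule L3[OF SM])
  show ?thesis
  proof (cases "\<rho> g0 ` M \<subseteq> M")
    case True
    have "GS M"
    proof (rule GS_I)
      show "0 \<in> M" using SS_D(1)[OF SM] .
      show "\<And>x y. x \<in> M \<Longrightarrow> y \<in> M \<Longrightarrow> x + y \<in> M" using SS_D(2)[OF SM] .
      show "\<And>c x. x \<in> M \<Longrightarrow> scale c x \<in> M" using SS_D(3)[OF SM] .
      fix g x assume g: "g \<in> U11 \<sigma>" and x: "x \<in> M"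
      show "\<rho> g x \<in> M"
      proof (cases "E1sq (m2_det g)")
        case True show ?thesis by (rule L1[OF SM g True x])
      next
        case False then have "E1sq (m2_det g * d0)" using classifyG g by blast
        then show ?thesis using L2[OF SM g _ x] \<open>\<rho> g0 ` M \<subseteq> M\<close> by blast
      qed
    qed
    then have M0: "M = {0}" using irrG MU by blast
    have "irred_subrep scale (SU11 \<sigma>) \<rho> UNIV"
      unfolding irred_subrep_def
    proof (intro conjI allI impI)
      show "SS UNIV" by (rule SS_I) auto
      show "UNIV \<noteq> {0::'v}" using x0 by blast
      fix U assume "SS U" "U \<subseteq> UNIV"
      then show "U = {0} \<or> U = UNIV" using maxM[of U] M0 SS_D(1) by blast
    qed
    then show ?thesis unfolding semisimple_length_le2_def by blast
  next
    case False
    then obtain m where m: "m \<in> M" "\<rho> g0 m \<notin> M" by blast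
    have gm0: "\<rho> g0 m \<noteq> 0" using m(2) SS_D(1)[OF SM] by auto
    define S where "S = {x. \<exists>a\<in>M. \<exists>b\<in>\<rho> g0 ` M. x = a + b}"
    define I where "I = M \<inter> \<rho> g0 ` M"
    have tyc: "E1sq (m2_det g) \<or> E1sq (m2_det g * d0)" if "g \<in> U11 \<sigma>" for g
      using classifyG that by blast
    have GSS: "GS S"
    proof (rule GS_I)
      have SSS: "SS S" unfolding S_def by (rule SS_sum[OF SM SgM])
      show "0 \<in> S" using SS_D(1)[OF SSS] .
      show "\<And>x y. x \<in> S \<Longrightarrow> y \<in> S \<Longrightarrow> x + y \<in> S" using SS_D(2)[OF SSS] .
      show "\<And>c x. x \<in> S \<Longrightarrow> scale c x \<in> S" using SS_D(3)[OF SSS] .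
      fix g x assume g: "g \<in> U11 \<sigma>" and "x \<in> S"
      then obtain a b where ab: "a \<in> M" "b \<in> M" "x = a + \<rho> g0 b" unfolding S_def by blast
      have e: "\<rho> g x = \<rho> g a + \<rho> g (\<rho> g0 b)" using ab rlinear(1)[OF g] by simp
      show "\<rho> g x \<in> S"
        using tyc[OF g]
      proof
        assume A: "E1sq (m2_det g)"
        show ?thesis using e L1[OF SM g A ab(1)] L4[OF SM g A ab(2)] unfolding S_def by blast
      next
        assume B: "E1sq (m2_det g * d0)"
        have "\<rho> g x = \<rho> g (\<rho> g0 b) + \<rho> g a" using e by (simp add: add.commute)
        then show ?thesis using L5[OF SM g B ab(2)] L2[OF SM g B ab(1)] unfolding S_def by blast
      qed
    qed
    have "\<rho> g0 m \<in> S" unfolding S_def using m SS_D(1)[OF SM] by force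
    then have SU: "S = UNIV" using stable_nz[OF GSS] gm0 by blast
    have GSI: "GS I"
    proof (rule GS_I)
      show "0 \<in> I" using SS_D(1)[OF SM] SS_D(1)[OF SgM] unfolding I_def by blast
      show "\<And>x y. x \<in> I \<Longrightarrow> y \<in> I \<Longrightarrow> x + y \<in> I"
        using SS_D(2)[OF SM] SS_D(2)[OF SgM] unfolding I_def by blast
      show "\<And>c x. x \<in> I \<Longrightarrow> scale c x \<in> I"
        using SS_D(3)[OF SM] SS_D(3)[OF SgM] unfolding I_def by blast
      fix g x assume g: "g \<in> U11 \<sigma>" and xI: "x \<in> I"
      then obtain b where b: "x \<in> M" "b \<in> M" "x = \<rho> g0 b" unfolding I_def by blast
      show "\<rho> g x \<in> I"
        using tyc[OF g]
      proof
        assume A: "E1sq (m2_det g)"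
        show ?thesis using L1[OF SM g A b(1)] L4[OF SM g A b(2)] b(3) unfolding I_def by blast
      next
        assume B: "E1sq (m2_det g * d0)"
        show ?thesis using L2[OF SM g B b(1)] L5[OF SM g B b(2)] b(3) unfolding I_def by blast
      qed
    qed
    have I0: "I = {0}" using irrG[OF GSI] MU unfolding I_def by blast
    have M0: "M \<noteq> {0}"
    proof
      assume "M = {0}" then have "\<rho> g0 m = 0" using m rlinear(3)[OF g0(1)] by simp
      with gm0 show False by simp
    qed
    have irr1: "irred_subrep scale (SU11 \<sigma>) \<rho> M"
      unfolding irred_subrep_def
    proof (intro conjI allI impI)
      show "SS M" by (rule SM)
      show "M \<noteq> {0}" by (rule M0)
      fix U assume SU': "SS U" and UM: "U \<subseteq> M"
      show "U = {0} \<or> U = M"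
      proof (rule ccontr)
        assume nU: "\<not> (U = {0} \<or> U = M)"
        then obtain u0 where u0: "u0 \<in> U" "u0 \<noteq> 0" using SS_D(1)[OF SU'] by blast
        obtain m' where m': "m' \<in> M" "m' \<notin> U" using nU UM by blast
        define X where "X = {x. \<exists>a\<in>M. \<exists>b\<in>\<rho> g0 ` U. x = a + b}"
        have SX: "SS X" unfolding X_def by (rule SS_sum[OF SM L3[OF SU']])
        have MX: "M \<subseteq> X" unfolding X_def using SS_D(1)[OF SU'] rlinear(3)[OF g0(1)] by force
        have "\<rho> g0 u0 \<in> X" unfolding X_def using u0 SS_D(1)[OF SM] by force
        moreover have "\<rho> g0 u0 \<notin> M"
        proof
          assume "\<rho> g0 u0 \<in> M"
          then have "\<rho> g0 u0 \<in> I" unfolding I_def using u0 UM by blast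
          then show False using I0 g0_nz[OF u0(2)] by simp
        qed
        ultimately have "X = UNIV" using maxM[OF SX MX] by blast
        then obtain a u where au: "a \<in> M" "u \<in> U" "\<rho> g0 m' = a + \<rho> g0 u" unfolding X_def by blast
        then have "a = \<rho> g0 m' - \<rho> g0 u" by (simp add: algebra_simps)
        then have "a = \<rho> g0 (m' - u)" using rlinear(4)[OF g0(1), of m' u] by simp
        moreover have "m' - u \<in> M" using SS_diff[OF SM m'(1)] au UM by blast
        ultimately have "a \<in> I" using au unfolding I_def by blast
        then have "\<rho> g0 (m' - u) = 0" using I0 \<open>a = \<rho> g0 (m' - u)\<close> by simp
        then have "m' = u" using g0_nz[of "m' - u"] by (metis right_minus_eq)
        then show False using m' au by simp
      qed
    qed
    have irr2: "irred_subrep scale (SU11 \<sigma>) \<rho> (\<rho> g0 ` M)"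
      unfolding irred_subrep_def
    proof (intro conjI allI impI)
      show "SS (\<rho> g0 ` M)" by (rule SgM)
      show "\<rho> g0 ` M \<noteq> {0}" using m gm0 by blast
      fix U assume SU': "SS U" and UM: "U \<subseteq> \<rho> g0 ` M"
      show "U = {0} \<or> U = \<rho> g0 ` M"
      proof (rule ccontr)
        assume nU: "\<not> (U = {0} \<or> U = \<rho> g0 ` M)"
        then obtain u0 where u0: "u0 \<in> U" "u0 \<noteq> 0" using SS_D(1)[OF SU'] by blast
        obtain y where y: "y \<in> \<rho> g0 ` M" "y \<notin> U" using nU UM by blast
        define X where "X = {x. \<exists>a\<in>M. \<exists>b\<in>U. x = a + b}"
        have SX: "SS X" unfolding X_def by (rule SS_sum[OF SM SU'])
        have MX: "M \<subseteq> X" unfolding X_def using SS_D(1)[OF SU'] by force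
        have "u0 \<in> X" unfolding X_def using u0 SS_D(1)[OF SM] by force
        moreover have "u0 \<notin> M"
        proof
          assume "u0 \<in> M"
          then have "u0 \<in> I" unfolding I_def using u0 UM by blast
          then show False using I0 u0 by simp
        qed
        ultimately have "X = UNIV" using maxM[OF SX MX] by blast
        then obtain a u where au: "a \<in> M" "u \<in> U" "y = a + u" unfolding X_def by blast
        have "a = y - u" using au by simp
        moreover have "y - u \<in> \<rho> g0 ` M" using SS_diff[OF SgM y(1)] au UM by blast
        ultimately have "a \<in> I" using au unfolding I_def by blast
        then have "a = 0" using I0 by simp
        then show False using au y by simp
      qed
    qed
    have "M \<inter> \<rho> g0 ` M = {0}" using I0 unfolding I_def .
    moreover have "\<forall>x. \<exists>a\<in>M. \<exists>b\<in>\<rho> g0 ` M. x = a + b" using SU unfolding S_def by blast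
    ultimately show ?thesis unfolding semisimple_length_le2_def using irr1 irr2 by blast
  qed
qed

end

theorem proposition4p6:
  fixes p :: nat and v :: "'e::field \<Rightarrow> int" and \<sigma> :: "'e \<Rightarrow> 'e"
    and scale :: "'k::field \<Rightarrow> 'v::ab_group_add \<Rightarrow> 'v" and \<rho> :: "'e mat2 \<Rightarrow> 'v \<Rightarrow> 'v"
  assumes "prime p" and "odd p"
    and "unram_quad_setting p v \<sigma>"
    and "is_Fpbar p TYPE('k)"
    and "is_rep scale (U11 \<sigma>) \<rho>"
    and "is_smooth v (U11 \<sigma>) \<rho>"
    and "irred_subrep scale (U11 \<sigma>) \<rho> UNIV"
  shows "has_central_character scale (U11 \<sigma>) \<rho> \<and> semisimple_length_le2 scale (SU11 \<sigma>) \<rho>"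
proof -
  interpret rp p v \<sigma> scale \<rho>
    by unfold_locales (use assms in auto)
  show ?thesis using central_char semisimple by blast
qed

end
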